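(* Fix constants $P_1,\dots,P_N\ge0$. For each $M$ let $\mathbf{a}^{(M)}\in\mathbb{C}^N$ satisfy $|a_i^{(M)}|^2=P_i/\sqrt{M}$. Then, almost surely, $$\lim_{M\to\infty}D_{\mathbf{H}_M}(\mathbf{a}^{(M)})=\frac{\sigma_\theta^4\Big(\sum_{i=1}^N P_i/d_i^{\alpha}\Big)^2}{\sum_{i=1}^N\sigma_{v,i}^4P_i^2/d_i^{2\alpha}+\sigma_n^4},$$ which does not depend on $M$; i.e. scaling the sensor transmit powers by $1/\sqrt{M}$ keeps the deflection of the energy detector asymptotically constant.
   Context: Constants: $\sigma_\theta^2,\sigma_n^2>0$, $\sigma_{v,i}^2>0$, $d_i>0$, $\alpha>0$; $\mathbf{V}=\mathrm{diag}\{\sigma_{v,1}^2,\dots,\sigma_{v,N}^2\}$. Channel: $(\tilde h_{mi})_{m\ge1,1\le i\le N}$ i.i.d. $\mathcal{CN}(0,1)$, $\mathbf{H}_M\in\mathbb{C}^{M\times N}$ with $[\mathbf{H}_M]_{mi}=\tilde h_{mi}/\sqrt{d_i^\alpha}$. For $\mathbf{a}\in\mathbb{C}^N$, $\mathbf{D}=\mathrm{diag}\{a_i\}$; with $\theta\sim\mathcal{CN}(0,\sigma_\theta^2)$, $\mathbf{v}\sim\mathcal{CN}(\mathbf{0},\mathbf{V})$, $\mathbf{n}\sim\mathcal{CN}(\mathbf{0},\sigma_n^2\mathbf{I}_M)$ independent, $\mathcal{H}_0:\mathbf{y}=\mathbf{H}\mathbf{D}\mathbf{v}+\mathbf{n}$,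 $\mathcal{H}_1:\mathbf{y}=\mathbf{H}\mathbf{a}\theta+\mathbf{H}\mathbf{D}\mathbf{v}+\mathbf{n}$. Energy detector statistic $T=\frac1M\mathbf{y}^H\mathbf{y}$. Deflection (with $\mathbf{H}$ held fixed, expectations over $\theta,\mathbf{v},\mathbf{n}$): $D_{\mathbf{H}}(\mathbf{a})=\dfrac{(\mathbb{E}\{T|\mathcal{H}_1\}-\mathbb{E}\{T|\mathcal{H}_0\})^2}{\mathrm{Var}\{T|\mathcal{H}_0\}}$. *)

theory Defs
  imports "HOL-Probability.Probability"
begin

text \<open>Circularly-symmetric complex Gaussian CN(0,s2): real and imaginary parts
  independent N(0, s2/2) (normal_density takes the standard deviation).\<close>
definition cgauss :: "real \<Rightarrow> complex measure" where
  "cgauss s2 = distr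
     (density lborel (normal_density 0 (sqrt (s2 / 2))) \<Otimes>\<^sub>M
      density lborel (normal_density 0 (sqrt (s2 / 2))))
     borel (\<lambda>(x, y). Complex x y)"

definition sig_space ::
  "nat \<Rightarrow> nat \<Rightarrow> real \<Rightarrow> (nat \<Rightarrow> real) \<Rightarrow> real
   \<Rightarrow> (complex \<times> (nat \<Rightarrow> complex) \<times> (nat \<Rightarrow> complex)) measure" where
  "sig_space N M st2 sv2 sn2 =
     cgauss st2 \<Otimes>\<^sub>M (PiM {..<N} (\<lambda>i. cgauss (sv2 i)) \<Otimes>\<^sub>M PiM {..<M} (\<lambda>_. cgauss sn2))"

text \<open>Observation y (entries m < M) for channel matrix H (entry H m i, m < M, i < N)
  and transmit vector a; hyp = True is H1, hyp = False is H0.\<close>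
definition obs ::
  "nat \<Rightarrow> (nat \<Rightarrow> nat \<Rightarrow> complex) \<Rightarrow> (nat \<Rightarrow> complex) \<Rightarrow> bool
   \<Rightarrow> complex \<times> (nat \<Rightarrow> complex) \<times> (nat \<Rightarrow> complex) \<Rightarrow> nat \<Rightarrow> complex" where
  "obs N H a hyp w m =
     (case w of (\<theta>, v, n) \<Rightarrow>
        (if hyp then (\<Sum>i<N. H m i * a i) * \<theta> else 0)
        + (\<Sum>i<N. H m i * a i * v i) + n m)"

definition energy ::
  "nat \<Rightarrow> nat \<Rightarrow> (nat \<Rightarrow> nat \<Rightarrow> complex) \<Rightarrow> (nat \<Rightarrow> complex) \<Rightarrow> bool
   \<Rightarrow> complex \<times> (nat \<Rightarrow> complex) \<times> (nat \<Rightarrow> complex) \<Rightarrow> real" where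
  "energy N M H a hyp w = (1 / real M) * (\<Sum>m<M. (cmod (obs N H a hyp w m))\<^sup>2)"

definition deflection ::
  "nat \<Rightarrow> nat \<Rightarrow> real \<Rightarrow> (nat \<Rightarrow> real) \<Rightarrow> real
   \<Rightarrow> (nat \<Rightarrow> nat \<Rightarrow> complex) \<Rightarrow> (nat \<Rightarrow> complex) \<Rightarrow> real" where
  "deflection N M st2 sv2 sn2 H a =
     (let S = sig_space N M st2 sv2 sn2;
          E1 = integral\<^sup>L S (energy N M H a True);
          E0 = integral\<^sup>L S (energy N M H a False);
          V0 = integral\<^sup>L S (\<lambda>w. (energy N M H a False w - E0)\<^sup>2)
      in (E1 - E0)\<^sup>2 / V0)"

definition chan_space :: "(nat \<times> nat \<Rightarrow> complex) measure" where
  "chan_space = PiM UNIV (\<lambda>_. cgauss 1)"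

end

theory Submission
  imports Defs "HOL-Real_Asymp.Real_Asymp"
begin

lemma hbi_pair_mult:
  fixes f :: "'a \<Rightarrow> complex" and g :: "'b \<Rightarrow> complex"
  assumes "sigma_finite_measure M1" "sigma_finite_measure M2"
    and f: "has_bochner_integral M1 f a" and g: "has_bochner_integral M2 g b"
  shows "has_bochner_integral (M1 \<Otimes>\<^sub>M M2) (\<lambda>z. f (fst z) * g (snd z)) (a * b)"
proof -
  interpret pair_sigma_finite M1 M2 using assms(1,2) by (simp add: pair_sigma_finite_def)
  have fi: "integrable M1 f" and gi: "integrable M2 g" using f g by (auto simp: has_bochner_integral_iff)
  have [measurable]: "f \<in> borel_measurable M1" "g \<in> borel_measurable M2" using fi gi by auto
  have int: "integrable (M1 \<Otimes>\<^sub>M M2) (\<lambda>z. f (fst z) * g (snd z))"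
  proof (rule Fubini_integrable)
    show "(\<lambda>z. f (fst z) * g (snd z)) \<in> borel_measurable (M1 \<Otimes>\<^sub>M M2)" by measurable
    have "(\<lambda>x. \<integral>y. norm (f (fst (x, y)) * g (snd (x, y))) \<partial>M2) = (\<lambda>x. norm (f x) * (\<integral>y. norm (g y) \<partial>M2))"
      by (simp add: norm_mult)
    then show "integrable M1 (\<lambda>x. \<integral>y. norm (f (fst (x, y)) * g (snd (x, y))) \<partial>M2)"
      using fi by (simp add: integrable_norm)
    show "AE x in M1. integrable M2 (\<lambda>y. f (fst (x, y)) * g (snd (x, y)))"
      using gi by simp
  qed
  have "integral\<^sup>L (M1 \<Otimes>\<^sub>M M2) (\<lambda>z. f (fst z) * g (snd z)) = (\<integral>x. (\<integral>y. f x * g y \<partial>M2) \<partial>M1)"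
    using integral_fst'[OF int] by simp
  also have "\<dots> = a * b" using f g by (simp add: has_bochner_integral_iff)
  finally show ?thesis using int by (simp add: has_bochner_integral_iff)
qed

definition rm :: "real \<Rightarrow> nat \<Rightarrow> real" where
  "rm \<sigma> k = (if k = 0 then 1 else if k = 2 then \<sigma>^2 else if k = 4 then 3 * \<sigma>^4 else 0)"

lemma real_mom:
  assumes "\<sigma> > 0" "k \<le> 4"
  shows "has_bochner_integral (density lborel (normal_density 0 \<sigma>)) (\<lambda>x. of_real (x ^ k) :: complex) (of_real (rm \<sigma> k))"
proof -
  have r: "has_bochner_integral lborel (\<lambda>x. normal_density 0 \<sigma> x * x ^ k) (rm \<sigma> k)"
  proof -
    have k: "k = 0 \<or> k = 1 \<or> k = 2 \<or> k = 3 \<or> k = 4" using assms(2) by auto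
    have e: "has_bochner_integral lborel (\<lambda>x. normal_density 0 \<sigma> x * x ^ (2 * j)) (fact (2 * j) / ((2 / \<sigma>\<^sup>2)^j * fact j))" for j
      using normal_moment_even[OF assms(1), where \<mu>=0 and k=j] by simp
    have o: "has_bochner_integral lborel (\<lambda>x. normal_density 0 \<sigma> x * x ^ (2 * j + 1)) 0" for j
      using normal_moment_odd[OF assms(1), where \<mu>=0 and k=j] by simp
    from k show ?thesis
    proof (elim disjE)
      assume "k = 0" then show ?thesis using e[of 0] by (simp add: rm_def)
    next
      assume "k = 1" then show ?thesis using o[of 0] by (simp add: rm_def)
    next
      assume "k = 2" then show ?thesis using e[of 1] assms(1) by (simp add: rm_def field_simps power2_eq_square)
    next
      assume "k = 3" then show ?thesis using o[of 1] by (simp add: rm_def)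
    next
      assume "k = 4" then show ?thesis using e[of 2] assms(1)
        by (simp add: rm_def field_simps fact_numeral power2_eq_square power4_eq_xxxx)
    qed
  qed
  have c: "has_bochner_integral lborel (\<lambda>x. normal_density 0 \<sigma> x *\<^sub>R (of_real (x ^ k) :: complex)) (of_real (rm \<sigma> k))"
    using has_bochner_integral_of_real[OF r] by (simp add: scaleR_conv_of_real)
  show ?thesis
    by (rule has_bochner_integral_density) (use c in auto)
qed

definition cm :: "real \<Rightarrow> nat \<Rightarrow> nat \<Rightarrow> complex" where
  "cm s p q = (if p = q then of_real (fact p * s ^ p) else 0)"

lemma prob_D: "prob_space (density lborel (normal_density 0 \<sigma>))" if "\<sigma> > 0"
  using prob_space_normal_density[OF that] .

lemma cmeas: "(\<lambda>(x, y). Complex x y) \<in> measurable (M1 \<Otimes>\<^sub>M M2) borel"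
  if "sets M1 = sets borel" "sets M2 = sets borel"
proof -
  have "(\<lambda>(x, y). Complex x y) = (\<lambda>z. complex_of_real (fst z) + \<i> * complex_of_real (snd z))"
    by (auto simp: fun_eq_iff Complex_eq)
  moreover have "(\<lambda>z. complex_of_real (fst z) + \<i> * complex_of_real (snd z)) \<in> measurable (M1 \<Otimes>\<^sub>M M2) borel"
    using that by measurable
  ultimately show ?thesis by simp
qed

lemma monmeas: "(\<lambda>z::complex. z ^ p * cnj z ^ q) \<in> borel_measurable borel"
  by (intro borel_measurable_continuous_onI continuous_intros)

lemma cg_mom_gen:
  assumes s: "s > 0" and pq: "p + q \<le> 4"
  shows "has_bochner_integral (cgauss s) (\<lambda>z. z ^ p * cnj z ^ q)
    (\<Sum>j\<le>p. \<Sum>l\<le>q. of_nat (p choose j) * of_nat (q choose l) * \<i> ^ (p - j) * (- \<i>) ^ (q - l)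
        * of_real (rm (sqrt (s/2)) (j + l) * rm (sqrt (s/2)) (p - j + (q - l))))"
proof -
  define \<sigma> where "\<sigma> = sqrt (s / 2)"
  have \<sigma>: "\<sigma> > 0" using s by (simp add: \<sigma>_def)
  define D where "D = density lborel (normal_density 0 \<sigma>)"
  have sfD: "sigma_finite_measure D" unfolding D_def using prob_D[OF \<sigma>] prob_space_imp_sigma_finite by blast
  have eq: "(case xy of (x, y) \<Rightarrow> Complex x y) ^ p * cnj (case xy of (x, y) \<Rightarrow> Complex x y) ^ q =
     (\<Sum>j\<le>p. \<Sum>l\<le>q. (of_nat (p choose j) * of_nat (q choose l) * \<i> ^ (p - j) * (- \<i>) ^ (q - l))
        * (of_real (fst xy ^ (j + l)) * of_real (snd xy ^ (p - j + (q - l)))))" for xy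
  proof -
    obtain x y where xy: "xy = (x, y)" by force
    have c1: "Complex x y = of_real x + \<i> * of_real y" by (simp add: Complex_eq)
    have c2: "cnj (Complex x y) = of_real x + (- \<i>) * of_real y" by (simp add: complex_eq_iff)
    have "Complex x y ^ p * cnj (Complex x y) ^ q =
      (\<Sum>j\<le>p. of_nat (p choose j) * of_real x ^ j * (\<i> * of_real y) ^ (p - j)) *
      (\<Sum>l\<le>q. of_nat (q choose l) * of_real x ^ l * (- \<i> * of_real y) ^ (q - l))"
      by (subst c2, subst c1, subst binomial_ring, subst binomial_ring, rule refl)
    also have "\<dots> = (\<Sum>j\<le>p. \<Sum>l\<le>q. (of_nat (p choose j) * of_real x ^ j * (\<i> * of_real y) ^ (p - j)) *
      (of_nat (q choose l) * of_real x ^ l * (- \<i> * of_real y) ^ (q - l)))"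
      by (simp add: sum_product)
    also have "\<dots> = (\<Sum>j\<le>p. \<Sum>l\<le>q. (of_nat (p choose j) * of_nat (q choose l) * \<i> ^ (p - j) * (- \<i>) ^ (q - l))
        * (of_real (x ^ (j + l)) * of_real (y ^ (p - j + (q - l)))))"
      by (intro sum.cong refl)
         (simp only: of_real_mult of_real_power power_add power_mult_distrib mult_ac)
    finally show ?thesis by (simp add: xy)
  qed
  have "has_bochner_integral (D \<Otimes>\<^sub>M D) (\<lambda>xy. \<Sum>j\<le>p. \<Sum>l\<le>q. (of_nat (p choose j) * of_nat (q choose l) * \<i> ^ (p - j) * (- \<i>) ^ (q - l))
        * (of_real (fst xy ^ (j + l)) * of_real (snd xy ^ (p - j + (q - l)))))
     (\<Sum>j\<le>p. \<Sum>l\<le>q. (of_nat (p choose j) * of_nat (q choose l) * \<i> ^ (p - j) * (- \<i>) ^ (q - l))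
        * (of_real (rm \<sigma> (j + l)) * of_real (rm \<sigma> (p - j + (q - l))) :: complex))"
  proof (intro has_bochner_integral_sum has_bochner_integral_mult_right)
    fix j l assume j: "j \<in> {..p}" and l: "l \<in> {..q}"
    show "has_bochner_integral (D \<Otimes>\<^sub>M D) (\<lambda>xy. of_real (fst xy ^ (j + l)) * of_real (snd xy ^ (p - j + (q - l))) :: complex)
       (of_real (rm \<sigma> (j + l)) * of_real (rm \<sigma> (p - j + (q - l))))"
      by (rule hbi_pair_mult[OF sfD sfD]; unfold D_def; rule real_mom[OF \<sigma>]) (use j l pq in auto)
  qed
  then have "has_bochner_integral (D \<Otimes>\<^sub>M D) (\<lambda>xy. (case xy of (x, y) \<Rightarrow> Complex x y) ^ p * cnj (case xy of (x, y) \<Rightarrow> Complex x y) ^ q)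
     (\<Sum>j\<le>p. \<Sum>l\<le>q. (of_nat (p choose j) * of_nat (q choose l) * \<i> ^ (p - j) * (- \<i>) ^ (q - l))
        * (of_real (rm \<sigma> (j + l)) * of_real (rm \<sigma> (p - j + (q - l))) :: complex))"
    by (simp only: eq)
  then have "has_bochner_integral (cgauss s) (\<lambda>z. z ^ p * cnj z ^ q)
     (\<Sum>j\<le>p. \<Sum>l\<le>q. (of_nat (p choose j) * of_nat (q choose l) * \<i> ^ (p - j) * (- \<i>) ^ (q - l))
        * (of_real (rm \<sigma> (j + l)) * of_real (rm \<sigma> (p - j + (q - l))) :: complex))"
    unfolding cgauss_def D_def[symmetric] \<sigma>_def[symmetric]
    by (intro has_bochner_integral_distr) (auto simp: cmeas D_def monmeas)
  then show ?thesis by (simp add: \<sigma>_def mult.assoc)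
qed

lemma cg_mom:
  assumes s: "s > 0" and pq: "p + q \<le> 4"
  shows "has_bochner_integral (cgauss s) (\<lambda>z. z ^ p * cnj z ^ q) (cm s p q)"
proof -
  have v: "(\<Sum>j\<le>p. \<Sum>l\<le>q. of_nat (p choose j) * of_nat (q choose l) * \<i> ^ (p - j) * (- \<i>) ^ (q - l)
        * of_real (rm (sqrt (s/2)) (j + l) * rm (sqrt (s/2)) (p - j + (q - l)))) = cm s p q"
  proof -
    have sq: "(sqrt (s/2))^2 = s/2" using s by simp
    have sq4: "(sqrt (s/2))^4 = (s/2)^2" using sq by (metis power_mult numeral_Bit0 mult_2 power_add power2_eq_square)
    have "p \<le> 4" "q \<le> 4" using pq by auto
    then have "p \<in> {0,1,2,3,4}" "q \<in> {0,1,2,3,4}" by auto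
    then show ?thesis using pq s
      by (auto simp: atMost_Suc rm_def cm_def sq sq4 numeral_eq_Suc field_simps power2_eq_square)
  qed
  show ?thesis using cg_mom_gen[OF assms] unfolding v .
qed

lemma prob_cgauss: "s > 0 \<Longrightarrow> prob_space (cgauss s)"
  unfolding cgauss_def
  by (intro prob_space.prob_space_distr prob_space_pair prob_D) (auto simp: cmeas)

definition mon :: "'k set \<Rightarrow> ('k \<Rightarrow> 'w \<Rightarrow> complex) \<Rightarrow> ('k \<Rightarrow> nat) \<Rightarrow> ('k \<Rightarrow> nat) \<Rightarrow> 'w \<Rightarrow> complex" where
  "mon K W p q w = (\<Prod>k\<in>K. W k w ^ p k * cnj (W k w) ^ q k)"

definition mom4 :: "'w measure \<Rightarrow> 'k set \<Rightarrow> ('k \<Rightarrow> 'w \<Rightarrow> complex) \<Rightarrow> ('k \<Rightarrow> real) \<Rightarrow> bool" where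
  "mom4 S K W s \<longleftrightarrow> finite K \<and> prob_space S \<and> (\<forall>k\<in>K. W k \<in> borel_measurable S) \<and>
     (\<forall>p q. (\<Sum>k\<in>K. p k + q k) \<le> 4 \<longrightarrow> has_bochner_integral S (mon K W p q) (\<Prod>k\<in>K. cm (s k) (p k) (q k)))"

lemma sets_cgauss[simp, measurable_cong]: "sets (cgauss s) = sets borel"
  by (simp add: cgauss_def)

lemma mom4_cgauss: "s > 0 \<Longrightarrow> mom4 (cgauss s) {()} (\<lambda>_ z. z) (\<lambda>_. s)"
  unfolding mom4_def mon_def
proof (intro conjI allI impI ballI)
  assume s: "s > 0"
  show "prob_space (cgauss s)" using prob_cgauss[OF s] .
  show "(\<lambda>z. z) \<in> borel_measurable (cgauss s)" for k :: unit
    by (rule measurable_ident_sets) simp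
  fix p q :: "unit \<Rightarrow> nat" assume "(\<Sum>k\<in>{()}. p k + q k) \<le> 4"
  then show "has_bochner_integral (cgauss s) (\<lambda>w. \<Prod>k\<in>{()}. w ^ p k * cnj w ^ q k) (\<Prod>k\<in>{()}. cm s (p k) (q k))"
    using cg_mom[OF s, of "p ()" "q ()"] by simp
qed simp

lemma mom4_PiM:
  assumes fin: "finite I" and s: "\<And>i. i \<in> I \<Longrightarrow> s i > 0"
  shows "mom4 (PiM I (\<lambda>i. cgauss (s i))) I (\<lambda>i x. x i) s"
proof -
  define s' where "s' i = (if i \<in> I then s i else 1)" for i
  have s': "s' i > 0" for i using s by (simp add: s'_def)
  have eqP: "PiM I (\<lambda>i. cgauss (s i)) = PiM I (\<lambda>i. cgauss (s' i))"
    by (rule PiM_cong) (auto simp: s'_def)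
  interpret product_prob_space "\<lambda>i. cgauss (s' i)"
    by (rule product_prob_spaceI) (rule prob_cgauss[OF s'])
  have ps: "prob_space (PiM I (\<lambda>i. cgauss (s' i)))"
    by (rule prob_space_PiM) (simp add: prob_cgauss s')
  have meas: "(\<lambda>x. x i) \<in> borel_measurable (PiM I (\<lambda>i. cgauss (s' i)))" if "i \<in> I" for i
    using measurable_component_singleton[OF that, of "\<lambda>i. cgauss (s' i)"]
      measurable_cong_sets[OF refl sets_cgauss, of "PiM I (\<lambda>i. cgauss (s' i))" "s' i"] by blast
  have mom: "has_bochner_integral (PiM I (\<lambda>i. cgauss (s' i))) (mon I (\<lambda>i x. x i) p q) (\<Prod>k\<in>I. cm (s k) (p k) (q k))"
    if pq: "(\<Sum>k\<in>I. p k + q k) \<le> 4" for p q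
  proof -
    have le: "p i + q i \<le> 4" if "i \<in> I" for i
      using member_le_sum[OF that, of "\<lambda>k. p k + q k"] fin pq by auto
    have hi: "has_bochner_integral (cgauss (s' i)) (\<lambda>z. z ^ p i * cnj z ^ q i) (cm (s i) (p i) (q i))" if "i \<in> I" for i
    proof -
      have "s' i = s i" using that by (simp add: s'_def)
      then show ?thesis using cg_mom[OF s'[of i] le[OF that]] by simp
    qed
    have int: "integrable (PiM I (\<lambda>i. cgauss (s' i))) (mon I (\<lambda>i x. x i) p q)"
      unfolding mon_def
      by (rule product_integrable_prod[OF fin, of "\<lambda>i z. z ^ p i * cnj z ^ q i"]) (use hi in \<open>auto simp: has_bochner_integral_iff\<close>)
    have "integral\<^sup>L (PiM I (\<lambda>i. cgauss (s' i))) (mon I (\<lambda>i x. x i) p q) = (\<Prod>k\<in>I. cm (s k) (p k) (q k))"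
      unfolding mon_def
      by (subst product_integral_prod[OF fin, of "\<lambda>i z. z ^ p i * cnj z ^ q i"])
         (use hi in \<open>auto simp: has_bochner_integral_iff intro!: prod.cong\<close>)
    then show ?thesis using int by (simp add: has_bochner_integral_iff)
  qed
  show ?thesis unfolding eqP mom4_def using fin ps meas mom by auto
qed

lemma mom4_pair:
  assumes m1: "mom4 S1 K1 W1 s1" and m2: "mom4 S2 K2 W2 s2"
  shows "mom4 (S1 \<Otimes>\<^sub>M S2) (K1 <+> K2)
     (\<lambda>k w. case k of Inl k1 \<Rightarrow> W1 k1 (fst w) | Inr k2 \<Rightarrow> W2 k2 (snd w)) (case_sum s1 s2)"
proof -
  have f1: "finite K1" and p1: "prob_space S1" and me1: "\<And>k. k \<in> K1 \<Longrightarrow> W1 k \<in> borel_measurable S1"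
    and h1: "\<And>p q. (\<Sum>k\<in>K1. p k + q k) \<le> 4 \<Longrightarrow> has_bochner_integral S1 (mon K1 W1 p q) (\<Prod>k\<in>K1. cm (s1 k) (p k) (q k))"
    using m1 unfolding mom4_def by auto
  have f2: "finite K2" and p2: "prob_space S2" and me2: "\<And>k. k \<in> K2 \<Longrightarrow> W2 k \<in> borel_measurable S2"
    and h2: "\<And>p q. (\<Sum>k\<in>K2. p k + q k) \<le> 4 \<Longrightarrow> has_bochner_integral S2 (mon K2 W2 p q) (\<Prod>k\<in>K2. cm (s2 k) (p k) (q k))"
    using m2 unfolding mom4_def by auto
  let ?W = "\<lambda>k w. case k of Inl k1 \<Rightarrow> W1 k1 (fst w) | Inr k2 \<Rightarrow> W2 k2 (snd w)"
  have sf1: "sigma_finite_measure S1" and sf2: "sigma_finite_measure S2"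
    using p1 p2 prob_space_imp_sigma_finite by auto
  have meas: "?W k \<in> borel_measurable (S1 \<Otimes>\<^sub>M S2)" if "k \<in> K1 <+> K2" for k
  proof (cases k)
    case (Inl k1)
    then have "k1 \<in> K1" using that by auto
    then show ?thesis using Inl measurable_compose[OF measurable_fst me1] by auto
  next
    case (Inr k2)
    then have "k2 \<in> K2" using that by auto
    then show ?thesis using Inr measurable_compose[OF measurable_snd me2] by auto
  qed
  have mom: "has_bochner_integral (S1 \<Otimes>\<^sub>M S2) (mon (K1 <+> K2) ?W p q) (\<Prod>k\<in>K1 <+> K2. cm (case_sum s1 s2 k) (p k) (q k))"
    if pq: "(\<Sum>k\<in>K1 <+> K2. p k + q k) \<le> 4" for p q
  proof -
    have "(\<Sum>k\<in>K1 <+> K2. p k + q k) = (\<Sum>k\<in>K1. p (Inl k) + q (Inl k)) + (\<Sum>k\<in>K2. p (Inr k) + q (Inr k))"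
      by (simp add: sum.Plus[OF f1 f2] comp_def)
    then have le1: "(\<Sum>k\<in>K1. p (Inl k) + q (Inl k)) \<le> 4" and le2: "(\<Sum>k\<in>K2. p (Inr k) + q (Inr k)) \<le> 4"
      using pq by auto
    have e: "mon (K1 <+> K2) ?W p q = (\<lambda>w. mon K1 W1 (p \<circ> Inl) (q \<circ> Inl) (fst w) * mon K2 W2 (p \<circ> Inr) (q \<circ> Inr) (snd w))"
      by (simp add: mon_def prod.Plus[OF f1 f2] comp_def fun_eq_iff)
    have v: "(\<Prod>k\<in>K1 <+> K2. cm (case_sum s1 s2 k) (p k) (q k)) =
       (\<Prod>k\<in>K1. cm (s1 k) ((p \<circ> Inl) k) ((q \<circ> Inl) k)) * (\<Prod>k\<in>K2. cm (s2 k) ((p \<circ> Inr) k) ((q \<circ> Inr) k))"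
      by (simp add: prod.Plus[OF f1 f2] comp_def)
    show ?thesis unfolding e v
      by (rule hbi_pair_mult[OF sf1 sf2 h1 h2]) (use le1 le2 in auto)
  qed
  show ?thesis unfolding mom4_def using f1 f2 p1 p2 meas mom by (auto intro: prob_space_pair)
qed

lemma prod_delta_pow:
  assumes "finite K" "a \<in> K"
  shows "(\<Prod>k\<in>K. (f k :: 'a::comm_monoid_mult) ^ (if k = a then 1 else 0)) = f a"
proof -
  have "(\<Prod>k\<in>K. f k ^ (if k = a then 1 else 0)) = (\<Prod>k\<in>K. if k = a then f k else 1)"
    by (intro prod.cong) auto
  also have "\<dots> = f a" using assms by (simp add: prod.delta)
  finally show ?thesis .
qed

lemma mom4_E2:
  assumes m: "mom4 S K W s" and a: "a \<in> K" and b: "b \<in> K"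
  shows "has_bochner_integral S (\<lambda>w. W a w * cnj (W b w)) (if a = b then of_real (s a) else 0)"
proof -
  have fin: "finite K" and h: "\<And>p q. (\<Sum>k\<in>K. p k + q k) \<le> 4 \<Longrightarrow> has_bochner_integral S (mon K W p q) (\<Prod>k\<in>K. cm (s k) (p k) (q k))"
    using m unfolding mom4_def by auto
  define p where "p k = (if k = a then 1 else 0 :: nat)" for k
  define q where "q k = (if k = b then 1 else 0 :: nat)" for k
  have "(\<Sum>k\<in>K. p k + q k) = 2"
    using fin a b by (simp add: p_def q_def sum.distrib sum.delta)
  then have H: "has_bochner_integral S (mon K W p q) (\<Prod>k\<in>K. cm (s k) (p k) (q k))" by (intro h) simp
  have e: "mon K W p q = (\<lambda>w. W a w * cnj (W b w))"
    unfolding mon_def prod.distrib p_def q_def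
    using prod_delta_pow[OF fin a, of "\<lambda>k. W k _"] prod_delta_pow[OF fin b, of "\<lambda>k. cnj (W k _)"]
    by (simp add: fun_eq_iff)
  have v: "(\<Prod>k\<in>K. cm (s k) (p k) (q k)) = (if a = b then of_real (s a) else 0)"
  proof (cases "a = b")
    case True
    have "(\<Prod>k\<in>K. cm (s k) (p k) (q k)) = (\<Prod>k\<in>K. if k = a then cm (s k) 1 1 else 1)"
      by (intro prod.cong) (auto simp: p_def q_def True cm_def)
    also have "\<dots> = of_real (s a)" using fin a by (simp add: prod.delta cm_def)
    finally show ?thesis using True by simp
  next
    case False
    have "cm (s a) (p a) (q a) = 0" using False by (simp add: p_def q_def cm_def)
    then show ?thesis using False fin a by (metis (no_types, lifting) prod_zero)
  qed
  show ?thesis using H unfolding e v .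
qed

lemma mom4_E4:
  assumes m: "mom4 S K W s" and a: "a \<in> K" and b: "b \<in> K" and c: "c \<in> K" and d: "d \<in> K"
  shows "has_bochner_integral S (\<lambda>w. W a w * cnj (W b w) * (W c w * cnj (W d w)))
     ((if a = b \<and> c = d then of_real (s a * s c) else 0) + (if a = d \<and> b = c then of_real (s a * s b) else 0))"
proof -
  have fin: "finite K" and h: "\<And>p q. (\<Sum>k\<in>K. p k + q k) \<le> 4 \<Longrightarrow> has_bochner_integral S (mon K W p q) (\<Prod>k\<in>K. cm (s k) (p k) (q k))"
    using m unfolding mom4_def by auto
  define p where "p k = (if k = a then 1 else 0) + (if k = c then 1 else 0 :: nat)" for k
  define q where "q k = (if k = b then 1 else 0) + (if k = d then 1 else 0 :: nat)" for k
  have "(\<Sum>k\<in>K. p k + q k) = 4"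
    using fin a b c d by (simp add: p_def q_def sum.distrib sum.delta)
  then have H: "has_bochner_integral S (mon K W p q) (\<Prod>k\<in>K. cm (s k) (p k) (q k))" by (intro h) simp
  have e: "mon K W p q = (\<lambda>w. W a w * cnj (W b w) * (W c w * cnj (W d w)))"
    unfolding mon_def prod.distrib p_def q_def power_add
    using prod_delta_pow[OF fin a, of "\<lambda>k. W k _"] prod_delta_pow[OF fin b, of "\<lambda>k. cnj (W k _)"]
      prod_delta_pow[OF fin c, of "\<lambda>k. W k _"] prod_delta_pow[OF fin d, of "\<lambda>k. cnj (W k _)"]
    by (simp add: fun_eq_iff mult_ac)
  have sub: "{a, b, c, d} \<subseteq> K" using a b c d by auto
  have "(\<Prod>k\<in>K. cm (s k) (p k) (q k)) = (\<Prod>k\<in>{a, b, c, d}. cm (s k) (p k) (q k))"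
    by (rule prod.mono_neutral_right[OF fin sub]) (auto simp: p_def q_def cm_def)
  also have "\<dots> = (if a = b \<and> c = d then of_real (s a * s c) else 0) + (if a = d \<and> b = c then of_real (s a * s b) else 0)"
    by (cases "a = b"; cases "a = c"; cases "a = d"; cases "b = c"; cases "b = d"; cases "c = d";
        simp add: p_def q_def cm_def insert_commute)
  finally show ?thesis using H unfolding e by simp
qed

lemma mom4_quad2:
  assumes m: "mom4 S K W s"
  shows "has_bochner_integral S (\<lambda>w. (\<Sum>k\<in>K. c1 k * W k w) * cnj (\<Sum>k\<in>K. c2 k * W k w))
     (\<Sum>k\<in>K. c1 k * cnj (c2 k) * of_real (s k))"
proof -
  have fin: "finite K" using m unfolding mom4_def by auto
  have e: "(\<Sum>k\<in>K. c1 k * W k w) * cnj (\<Sum>k\<in>K. c2 k * W k w) =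
      (\<Sum>a\<in>K. \<Sum>b\<in>K. (c1 a * cnj (c2 b)) * (W a w * cnj (W b w)))" for w
    by (simp add: sum_product cnj_sum mult_ac)
  have H: "has_bochner_integral S (\<lambda>w. \<Sum>a\<in>K. \<Sum>b\<in>K. (c1 a * cnj (c2 b)) * (W a w * cnj (W b w)))
      (\<Sum>a\<in>K. \<Sum>b\<in>K. (c1 a * cnj (c2 b)) * (if a = b then of_real (s a) else 0))"
    by (intro has_bochner_integral_sum has_bochner_integral_mult_right mom4_E2[OF m])
  have v: "(\<Sum>a\<in>K. \<Sum>b\<in>K. (c1 a * cnj (c2 b)) * (if a = b then of_real (s a) else 0)) = (\<Sum>k\<in>K. c1 k * cnj (c2 k) * of_real (s k))"
    using fin by (simp add: if_distrib[of "\<lambda>x. _ * x"] sum.delta cong: if_cong)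
  show ?thesis using H unfolding e[symmetric] v .
qed

lemma mom4_quad4:
  assumes m: "mom4 S K W s"
  defines "G \<equiv> \<lambda>c e. (\<Sum>k\<in>K. c k * cnj (e k) * of_real (s k))"
  shows "has_bochner_integral S (\<lambda>w. (\<Sum>k\<in>K. c1 k * W k w) * cnj (\<Sum>k\<in>K. c2 k * W k w) *
       ((\<Sum>k\<in>K. c3 k * W k w) * cnj (\<Sum>k\<in>K. c4 k * W k w)))
     (G c1 c2 * G c3 c4 + G c1 c4 * G c3 c2)"
proof -
  have fin: "finite K" using m unfolding mom4_def by auto
  have e: "(\<Sum>k\<in>K. c1 k * W k w) * cnj (\<Sum>k\<in>K. c2 k * W k w) *
       ((\<Sum>k\<in>K. c3 k * W k w) * cnj (\<Sum>k\<in>K. c4 k * W k w)) =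
      (\<Sum>a\<in>K. \<Sum>b\<in>K. \<Sum>c\<in>K. \<Sum>d\<in>K. (c1 a * cnj (c2 b) * (c3 c * cnj (c4 d))) * (W a w * cnj (W b w) * (W c w * cnj (W d w))))" for w
  proof -
    have e2: "(\<Sum>k\<in>K. c k * W k w) * cnj (\<Sum>k\<in>K. e k * W k w) =
      (\<Sum>a\<in>K. \<Sum>b\<in>K. (c a * cnj (e b)) * (W a w * cnj (W b w)))" for c e
      by (simp add: sum_product cnj_sum mult_ac)
    have fp: "(\<Sum>a\<in>K. \<Sum>b\<in>K. A a b) * (\<Sum>c\<in>K. \<Sum>d\<in>K. B c d) = (\<Sum>a\<in>K. \<Sum>b\<in>K. \<Sum>c\<in>K. \<Sum>d\<in>K. A a b * B c d)"
      for A B :: "_ \<Rightarrow> _ \<Rightarrow> complex"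
      apply (simp only: sum_product)
      apply (rule sum.cong[OF refl])
      apply (rule sum.swap)
      done
    show ?thesis unfolding e2 fp
      by (intro sum.cong refl) (simp add: mult_ac)
  qed
  have H: "has_bochner_integral S (\<lambda>w. \<Sum>a\<in>K. \<Sum>b\<in>K. \<Sum>c\<in>K. \<Sum>d\<in>K. (c1 a * cnj (c2 b) * (c3 c * cnj (c4 d))) * (W a w * cnj (W b w) * (W c w * cnj (W d w))))
      (\<Sum>a\<in>K. \<Sum>b\<in>K. \<Sum>c\<in>K. \<Sum>d\<in>K. (c1 a * cnj (c2 b) * (c3 c * cnj (c4 d))) *
        ((if a = b \<and> c = d then of_real (s a * s c) else 0) + (if a = d \<and> b = c then of_real (s a * s b) else 0)))"
    by (intro has_bochner_integral_sum has_bochner_integral_mult_right mom4_E4[OF m])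
  have v1: "(\<Sum>a\<in>K. \<Sum>b\<in>K. \<Sum>c\<in>K. \<Sum>d\<in>K. (c1 a * cnj (c2 b) * (c3 c * cnj (c4 d))) *
        (if a = b \<and> c = d then of_real (s a * s c) else 0)) = G c1 c2 * G c3 c4"
  proof -
    have "(\<Sum>a\<in>K. \<Sum>b\<in>K. \<Sum>c\<in>K. \<Sum>d\<in>K. (c1 a * cnj (c2 b) * (c3 c * cnj (c4 d))) *
        (if a = b \<and> c = d then of_real (s a * s c) else 0)) =
        (\<Sum>a\<in>K. \<Sum>b\<in>K. if a = b then (\<Sum>c\<in>K. \<Sum>d\<in>K. if c = d then (c1 a * cnj (c2 b) * (c3 c * cnj (c4 d))) * of_real (s a * s c) else 0) else 0)"
      by (intro sum.cong refl) (auto intro!: sum.cong)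
    also have "\<dots> = (\<Sum>a\<in>K. \<Sum>c\<in>K. (c1 a * cnj (c2 a) * (c3 c * cnj (c4 c))) * of_real (s a * s c))"
      using fin by (simp add: sum.delta)
    also have "\<dots> = G c1 c2 * G c3 c4"
      unfolding G_def by (simp add: sum_product mult_ac)
    finally show ?thesis .
  qed
  have v2: "(\<Sum>a\<in>K. \<Sum>b\<in>K. \<Sum>c\<in>K. \<Sum>d\<in>K. (c1 a * cnj (c2 b) * (c3 c * cnj (c4 d))) *
        (if a = d \<and> b = c then of_real (s a * s b) else 0)) = G c1 c4 * G c3 c2"
  proof -
    have "(\<Sum>a\<in>K. \<Sum>b\<in>K. \<Sum>c\<in>K. \<Sum>d\<in>K. (c1 a * cnj (c2 b) * (c3 c * cnj (c4 d))) *
        (if a = d \<and> b = c then of_real (s a * s b) else 0)) =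
        (\<Sum>a\<in>K. \<Sum>b\<in>K. \<Sum>c\<in>K. if b = c then (\<Sum>d\<in>K. if a = d then (c1 a * cnj (c2 b) * (c3 c * cnj (c4 d))) * of_real (s a * s b) else 0) else 0)"
      by (intro sum.cong refl) (auto intro!: sum.cong)
    also have "\<dots> = (\<Sum>a\<in>K. \<Sum>b\<in>K. (c1 a * cnj (c2 b) * (c3 b * cnj (c4 a))) * of_real (s a * s b))"
      using fin by (simp add: sum.delta)
    also have "\<dots> = G c1 c4 * G c3 c2"
      unfolding G_def by (simp add: sum_product mult_ac)
    finally show ?thesis .
  qed
  have v: "(\<Sum>a\<in>K. \<Sum>b\<in>K. \<Sum>c\<in>K. \<Sum>d\<in>K. (c1 a * cnj (c2 b) * (c3 c * cnj (c4 d))) *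
        ((if a = b \<and> c = d then of_real (s a * s c) else 0) + (if a = d \<and> b = c then of_real (s a * s b) else 0)))
      = G c1 c2 * G c3 c4 + G c1 c4 * G c3 c2"
    unfolding v1[symmetric] v2[symmetric] by (simp add: distrib_left sum.distrib)
  show ?thesis using H unfolding e[symmetric] v .
qed

definition KK :: "nat \<Rightarrow> nat \<Rightarrow> (unit + (nat + nat)) set" where
  "KK N M = {()} <+> ({..<N} <+> {..<M})"

definition WW :: "unit + (nat + nat) \<Rightarrow> complex \<times> (nat \<Rightarrow> complex) \<times> (nat \<Rightarrow> complex) \<Rightarrow> complex" where
  "WW k w = (case k of Inl _ \<Rightarrow> fst w | Inr (Inl i) \<Rightarrow> fst (snd w) i | Inr (Inr m) \<Rightarrow> snd (snd w) m)"

definition ss :: "real \<Rightarrow> (nat \<Rightarrow> real) \<Rightarrow> real \<Rightarrow> unit + (nat + nat) \<Rightarrow> real" where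
  "ss st2 sv2 sn2 k = (case k of Inl _ \<Rightarrow> st2 | Inr (Inl i) \<Rightarrow> sv2 i | Inr (Inr m) \<Rightarrow> sn2)"

lemma mom4_sig:
  assumes "st2 > 0" "sn2 > 0" "\<And>i. i < N \<Longrightarrow> sv2 i > 0"
  shows "mom4 (sig_space N M st2 sv2 sn2) (KK N M) WW (ss st2 sv2 sn2)"
proof -
  have "mom4 (sig_space N M st2 sv2 sn2) (KK N M)
     (\<lambda>k w. case k of Inl k1 \<Rightarrow> (\<lambda>_ z. z) k1 (fst w) | Inr k2 \<Rightarrow>
        (\<lambda>k w. case k of Inl k1 \<Rightarrow> (\<lambda>i x. x i) k1 (fst w) | Inr k2 \<Rightarrow> (\<lambda>i x. x i) k2 (snd w)) k2 (snd w))
     (case_sum (\<lambda>_. st2) (case_sum sv2 (\<lambda>_. sn2)))"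
    unfolding sig_space_def KK_def
    by (intro mom4_pair mom4_cgauss mom4_PiM) (use assms in auto)
  moreover have "(\<lambda>k w. case k of Inl k1 \<Rightarrow> (\<lambda>_ z. z) k1 (fst w) | Inr k2 \<Rightarrow>
        (\<lambda>k w. case k of Inl k1 \<Rightarrow> (\<lambda>i x. x i) k1 (fst w) | Inr k2 \<Rightarrow> (\<lambda>i x. x i) k2 (snd w)) k2 (snd w)) = WW"
    by (auto simp: fun_eq_iff WW_def split: sum.split)
  moreover have "case_sum (\<lambda>_. st2) (case_sum sv2 (\<lambda>_. sn2)) = ss st2 sv2 sn2"
    by (auto simp: fun_eq_iff ss_def split: sum.split)
  ultimately show ?thesis by simp
qed

definition cf :: "nat \<Rightarrow> (nat \<Rightarrow> nat \<Rightarrow> complex) \<Rightarrow> (nat \<Rightarrow> complex) \<Rightarrow> bool \<Rightarrow> nat \<Rightarrow> unit + (nat + nat) \<Rightarrow> complex" where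
  "cf N H a hyp m k = (case k of Inl _ \<Rightarrow> (if hyp then (\<Sum>i<N. H m i * a i) else 0)
      | Inr (Inl i) \<Rightarrow> H m i * a i | Inr (Inr m') \<Rightarrow> (if m' = m then 1 else 0))"

lemma obs_eq:
  assumes "m < M"
  shows "obs N H a hyp w m = (\<Sum>k\<in>KK N M. cf N H a hyp m k * WW k w)"
proof -
  obtain t v n where w: "w = (t, v, n)" by (cases w) auto
  have "(\<Sum>k\<in>KK N M. cf N H a hyp m k * WW k w) =
     (if hyp then (\<Sum>i<N. H m i * a i) else 0) * t + ((\<Sum>i<N. H m i * a i * v i) + (\<Sum>m'<M. (if m' = m then 1 else 0) * n m'))"
    unfolding KK_def by (simp add: sum.Plus comp_def cf_def WW_def w)
  also have "(\<Sum>m'<M. (if m' = m then 1 else 0) * n m') = (\<Sum>m'<M. if m' = m then n m else 0)"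
    by (rule sum.cong) auto
  also have "\<dots> = n m" using assms by simp
  finally show ?thesis by (simp add: obs_def w)
qed

definition Gf where
  "Gf N M H a hyp st2 sv2 sn2 m m' = (\<Sum>k\<in>KK N M. cf N H a hyp m k * cnj (cf N H a hyp m' k) * of_real (ss st2 sv2 sn2 k))"

lemma Gf_eval:
  assumes "m < M" "m' < M"
  shows "Gf N M H a hyp st2 sv2 sn2 m m' =
    (if hyp then of_real st2 * (\<Sum>i<N. H m i * a i) * cnj (\<Sum>i<N. H m' i * a i) else 0) +
    (\<Sum>i<N. H m i * a i * cnj (H m' i * a i) * of_real (sv2 i)) + (if m = m' then of_real sn2 else 0)"
  using assms unfolding Gf_def KK_def
  by (simp add: sum.Plus comp_def cf_def ss_def if_distrib[of "\<lambda>x. x * _"] sum.delta cong: if_cong)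

lemma Gf_cnj: "Gf N M H a hyp st2 sv2 sn2 m' m = cnj (Gf N M H a hyp st2 sv2 sn2 m m')"
  unfolding Gf_def by (simp add: cnj_sum mult_ac)

lemma Gf_real: "Im (Gf N M H a hyp st2 sv2 sn2 m m) = 0"
  using Gf_cnj[of N M H a hyp st2 sv2 sn2 m m] by (metis Reals_cnj_iff complex_is_Real_iff)

lemma hb_const_prob:
  assumes "prob_space M" shows "has_bochner_integral M (\<lambda>_. c::real) c"
proof -
  interpret prob_space M by fact
  show ?thesis by (simp add: has_bochner_integral_iff prob_space)
qed

context
  fixes N M :: nat and st2 sn2 :: real and sv2 :: "nat \<Rightarrow> real" and H :: "nat \<Rightarrow> nat \<Rightarrow> complex" and a :: "nat \<Rightarrow> complex"
  assumes m4: "mom4 (sig_space N M st2 sv2 sn2) (KK N M) WW (ss st2 sv2 sn2)"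
begin

abbreviation "S \<equiv> sig_space N M st2 sv2 sn2"
abbreviation "G hyp \<equiv> Gf N M H a hyp st2 sv2 sn2"

lemma hb_obs2:
  assumes "m < M" "m' < M"
  shows "has_bochner_integral S (\<lambda>w. obs N H a hyp w m * cnj (obs N H a hyp w m')) (G hyp m m')"
proof -
  have "(\<lambda>w. obs N H a hyp w m * cnj (obs N H a hyp w m')) =
     (\<lambda>w. (\<Sum>k\<in>KK N M. cf N H a hyp m k * WW k w) * cnj (\<Sum>k\<in>KK N M. cf N H a hyp m' k * WW k w))"
    using obs_eq[OF assms(1)] obs_eq[OF assms(2)] by simp
  then show ?thesis unfolding Gf_def using mom4_quad2[OF m4] by simp
qed

lemma hb_obs4:
  assumes "m < M" "m' < M"
  shows "has_bochner_integral S (\<lambda>w. obs N H a hyp w m * cnj (obs N H a hyp w m) * (obs N H a hyp w m' * cnj (obs N H a hyp w m')))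
     (G hyp m m * G hyp m' m' + G hyp m m' * G hyp m' m)"
proof -
  have "(\<lambda>w. obs N H a hyp w m * cnj (obs N H a hyp w m) * (obs N H a hyp w m' * cnj (obs N H a hyp w m'))) =
     (\<lambda>w. (\<Sum>k\<in>KK N M. cf N H a hyp m k * WW k w) * cnj (\<Sum>k\<in>KK N M. cf N H a hyp m k * WW k w) *
       ((\<Sum>k\<in>KK N M. cf N H a hyp m' k * WW k w) * cnj (\<Sum>k\<in>KK N M. cf N H a hyp m' k * WW k w)))"
    using obs_eq[OF assms(1)] obs_eq[OF assms(2)] by simp
  then show ?thesis unfolding Gf_def using mom4_quad4[OF m4] by simp
qed

lemma hb_energy:
  "has_bochner_integral S (energy N M H a hyp) ((1 / real M) * (\<Sum>m<M. Re (G hyp m m)))"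
proof -
  have "has_bochner_integral S (\<lambda>w. \<Sum>m<M. obs N H a hyp w m * cnj (obs N H a hyp w m)) (\<Sum>m<M. G hyp m m)"
    by (intro has_bochner_integral_sum hb_obs2) auto
  then have "has_bochner_integral S (\<lambda>w. Re (\<Sum>m<M. obs N H a hyp w m * cnj (obs N H a hyp w m))) (Re (\<Sum>m<M. G hyp m m))"
    by (rule has_bochner_integral_Re)
  moreover have "(\<lambda>w. Re (\<Sum>m<M. obs N H a hyp w m * cnj (obs N H a hyp w m))) = (\<lambda>w. \<Sum>m<M. (cmod (obs N H a hyp w m))\<^sup>2)"
    by (rule ext) (simp only: complex_norm_square[symmetric] Re_sum Re_complex_of_real)
  ultimately have "has_bochner_integral S (\<lambda>w. \<Sum>m<M. (cmod (obs N H a hyp w m))\<^sup>2) (\<Sum>m<M. Re (G hyp m m))"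
    by simp
  then show ?thesis unfolding energy_def by (rule has_bochner_integral_mult_right)
qed

lemma hb_energy2:
  "has_bochner_integral S (\<lambda>w. (energy N M H a hyp w)\<^sup>2)
     ((1 / real M)\<^sup>2 * (\<Sum>m<M. \<Sum>m'<M. Re (G hyp m m * G hyp m' m' + G hyp m m' * G hyp m' m)))"
proof -
  have "has_bochner_integral S (\<lambda>w. \<Sum>m<M. \<Sum>m'<M. obs N H a hyp w m * cnj (obs N H a hyp w m) * (obs N H a hyp w m' * cnj (obs N H a hyp w m')))
     (\<Sum>m<M. \<Sum>m'<M. G hyp m m * G hyp m' m' + G hyp m m' * G hyp m' m)"
    by (intro has_bochner_integral_sum hb_obs4) auto
  then have "has_bochner_integral S (\<lambda>w. Re (\<Sum>m<M. \<Sum>m'<M. obs N H a hyp w m * cnj (obs N H a hyp w m) * (obs N H a hyp w m' * cnj (obs N H a hyp w m'))))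
     (Re (\<Sum>m<M. \<Sum>m'<M. G hyp m m * G hyp m' m' + G hyp m m' * G hyp m' m))"
    by (rule has_bochner_integral_Re)
  moreover have "(\<lambda>w. Re (\<Sum>m<M. \<Sum>m'<M. obs N H a hyp w m * cnj (obs N H a hyp w m) * (obs N H a hyp w m' * cnj (obs N H a hyp w m')))) =
     (\<lambda>w. (\<Sum>m<M. (cmod (obs N H a hyp w m))\<^sup>2)\<^sup>2)"
    by (rule ext) (simp only: complex_norm_square[symmetric] of_real_mult[symmetric] Re_sum Re_complex_of_real power2_eq_square[of "sum _ _"] sum_product)
  ultimately have "has_bochner_integral S (\<lambda>w. (\<Sum>m<M. (cmod (obs N H a hyp w m))\<^sup>2)\<^sup>2)
     (\<Sum>m<M. \<Sum>m'<M. Re (G hyp m m * G hyp m' m' + G hyp m m' * G hyp m' m))"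
    by simp
  then show ?thesis unfolding energy_def power_mult_distrib by (rule has_bochner_integral_mult_right)
qed

lemma defl_formula:
  "deflection N M st2 sv2 sn2 H a =
    ((1 / real M) * (\<Sum>m<M. Re (G True m m - G False m m)))\<^sup>2 /
    ((1 / real M)\<^sup>2 * (\<Sum>m<M. \<Sum>m'<M. (cmod (G False m m'))\<^sup>2))"
proof -
  have ps: "prob_space S" using m4 unfolding mom4_def by auto
  define E0 where "E0 = (1 / real M) * (\<Sum>m<M. Re (G False m m))"
  define E2 where "E2 = (1 / real M)\<^sup>2 * (\<Sum>m<M. \<Sum>m'<M. Re (G False m m * G False m' m' + G False m m' * G False m' m))"
  have i1: "integral\<^sup>L S (energy N M H a True) = (1 / real M) * (\<Sum>m<M. Re (G True m m))"
    using hb_energy by (rule has_bochner_integral_integral_eq)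
  have i0: "integral\<^sup>L S (energy N M H a False) = E0"
    unfolding E0_def using hb_energy by (rule has_bochner_integral_integral_eq)
  have "has_bochner_integral S (\<lambda>w. (energy N M H a False w)\<^sup>2 - 2 * E0 * energy N M H a False w + E0\<^sup>2) (E2 - 2 * E0 * E0 + E0\<^sup>2)"
    unfolding E2_def E0_def
    by (intro has_bochner_integral_add has_bochner_integral_diff hb_energy2 has_bochner_integral_mult_right hb_energy hb_const_prob ps)
  moreover have "(\<lambda>w. (energy N M H a False w)\<^sup>2 - 2 * E0 * energy N M H a False w + E0\<^sup>2) = (\<lambda>w. (energy N M H a False w - E0)\<^sup>2)"
    by (rule ext) (simp add: power2_eq_square algebra_simps)
  ultimately have iv: "integral\<^sup>L S (\<lambda>w. (energy N M H a False w - E0)\<^sup>2) = E2 - E0\<^sup>2"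
    by (simp add: has_bochner_integral_integral_eq power2_eq_square)
  have "E2 - E0\<^sup>2 = (1 / real M)\<^sup>2 * (\<Sum>m<M. \<Sum>m'<M. (cmod (G False m m'))\<^sup>2)"
  proof -
    have r: "Re (G False m m * G False m' m') = Re (G False m m) * Re (G False m' m')" for m m'
      using Gf_real[of N M H a False st2 sv2 sn2 m] by simp
    have c: "Re (G False m m' * G False m' m) = (cmod (G False m m'))\<^sup>2" for m m'
      unfolding Gf_cnj[of N M H a False st2 sv2 sn2 m' m] complex_norm_square[symmetric] by simp
    have "E0\<^sup>2 = (1 / real M)\<^sup>2 * (\<Sum>m<M. \<Sum>m'<M. Re (G False m m) * Re (G False m' m'))"
      unfolding E0_def by (simp add: power2_eq_square sum_product)
    moreover have "E2 = (1 / real M)\<^sup>2 * (\<Sum>m<M. \<Sum>m'<M. Re (G False m m) * Re (G False m' m') + (cmod (G False m m'))\<^sup>2)"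
      unfolding E2_def by (simp only: plus_complex.sel r c)
    ultimately show ?thesis by (simp add: sum.distrib algebra_simps)
  qed
  then show ?thesis
    unfolding deflection_def Let_def i1 i0 iv by (simp add: E0_def sum_subtractf diff_divide_distrib)
qed

end

lemma sum_swap4:
  "(\<Sum>a\<in>A. \<Sum>b\<in>B. \<Sum>c\<in>C. \<Sum>d\<in>D. f a b c d) = (\<Sum>c\<in>C. \<Sum>d\<in>D. \<Sum>a\<in>A. \<Sum>b\<in>B. f a b c d)"
proof -
  have "(\<Sum>a\<in>A. \<Sum>b\<in>B. \<Sum>c\<in>C. \<Sum>d\<in>D. f a b c d) = (\<Sum>a\<in>A. \<Sum>c\<in>C. \<Sum>b\<in>B. \<Sum>d\<in>D. f a b c d)"
    by (rule sum.cong[OF refl], rule sum.swap)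
  also have "\<dots> = (\<Sum>c\<in>C. \<Sum>a\<in>A. \<Sum>b\<in>B. \<Sum>d\<in>D. f a b c d)" by (rule sum.swap)
  also have "\<dots> = (\<Sum>c\<in>C. \<Sum>a\<in>A. \<Sum>d\<in>D. \<Sum>b\<in>B. f a b c d)"
    by (rule sum.cong[OF refl], rule sum.cong[OF refl], rule sum.swap)
  also have "\<dots> = (\<Sum>c\<in>C. \<Sum>d\<in>D. \<Sum>a\<in>A. \<Sum>b\<in>B. f a b c d)"
    by (rule sum.cong[OF refl], rule sum.swap)
  finally show ?thesis .
qed

lemma id1:
  fixes h :: "nat \<times> nat \<Rightarrow> complex"
  shows "(\<Sum>m<M. (\<Sum>i<N. h (m, i) * c i) * cnj (\<Sum>i<N. h (m, i) * c i)) =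
     (\<Sum>i<N. \<Sum>j<N. c i * cnj (c j) * (\<Sum>m<M. h (m, i) * cnj (h (m, j))))"
proof -
  have "(\<Sum>m<M. (\<Sum>i<N. h (m, i) * c i) * cnj (\<Sum>i<N. h (m, i) * c i)) =
     (\<Sum>m<M. \<Sum>i<N. \<Sum>j<N. h (m, i) * c i * cnj (h (m, j) * c j))"
    by (simp add: sum_product cnj_sum)
  also have "\<dots> = (\<Sum>i<N. \<Sum>m<M. \<Sum>j<N. h (m, i) * c i * cnj (h (m, j) * c j))" by (rule sum.swap)
  also have "\<dots> = (\<Sum>i<N. \<Sum>j<N. \<Sum>m<M. h (m, i) * c i * cnj (h (m, j) * c j))"
    by (rule sum.cong[OF refl], rule sum.swap)
  also have "\<dots> = (\<Sum>i<N. \<Sum>j<N. c i * cnj (c j) * (\<Sum>m<M. h (m, i) * cnj (h (m, j))))"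
    by (simp add: sum_distrib_left mult_ac)
  finally show ?thesis .
qed

lemma id2:
  fixes h :: "nat \<times> nat \<Rightarrow> complex" and w :: "nat \<Rightarrow> real"
  shows "(\<Sum>m<M. \<Sum>m'<M. (cmod (\<Sum>i<N. h (m, i) * cnj (h (m', i)) * of_real (w i)))\<^sup>2) =
     (\<Sum>i<N. \<Sum>j<N. w i * w j * (cmod (\<Sum>m<M. h (m, i) * cnj (h (m, j))))\<^sup>2)"
proof -
  have "complex_of_real (\<Sum>m<M. \<Sum>m'<M. (cmod (\<Sum>i<N. h (m, i) * cnj (h (m', i)) * of_real (w i)))\<^sup>2) =
     (\<Sum>m<M. \<Sum>m'<M. \<Sum>i<N. \<Sum>j<N. h (m, i) * cnj (h (m', i)) * of_real (w i) * cnj (h (m, j) * cnj (h (m', j)) * of_real (w j)))"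
    by (simp only: of_real_sum complex_norm_square sum_product cnj_sum)
  also have "\<dots> = (\<Sum>i<N. \<Sum>j<N. \<Sum>m<M. \<Sum>m'<M. h (m, i) * cnj (h (m', i)) * of_real (w i) * cnj (h (m, j) * cnj (h (m', j)) * of_real (w j)))"
    by (rule sum_swap4)
  also have "\<dots> = (\<Sum>i<N. \<Sum>j<N. \<Sum>m'<M. \<Sum>m<M. h (m, i) * cnj (h (m', i)) * of_real (w i) * cnj (h (m, j) * cnj (h (m', j)) * of_real (w j)))"
    by (rule sum.cong[OF refl], rule sum.cong[OF refl], rule sum.swap)
  also have "\<dots> = (\<Sum>i<N. \<Sum>j<N. of_real (w i * w j) * ((\<Sum>m<M. h (m, i) * cnj (h (m, j))) * cnj (\<Sum>m<M. h (m, i) * cnj (h (m, j)))))"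
    by (simp add: sum_product sum_distrib_left cnj_sum mult_ac)
  also have "\<dots> = complex_of_real (\<Sum>i<N. \<Sum>j<N. w i * w j * (cmod (\<Sum>m<M. h (m, i) * cnj (h (m, j))))\<^sup>2)"
    by (simp only: of_real_sum of_real_mult complex_norm_square)
  finally show ?thesis by (simp only: of_real_eq_iff)
qed

lemma cmod_add_real_sq: "(cmod (z + complex_of_real r))\<^sup>2 = (cmod z)\<^sup>2 + 2 * r * Re z + r\<^sup>2"
  by (simp only: cmod_power2) (simp add: power2_eq_square algebra_simps)

lemma defl_h:
  fixes h :: "nat \<times> nat \<Rightarrow> complex" and a :: "nat \<Rightarrow> complex" and g :: "nat \<Rightarrow> real" and M :: nat
  assumes pos: "st2 > 0" "sn2 > 0" "\<And>i. i < N \<Longrightarrow> sv2 i > 0"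
  defines "c \<equiv> \<lambda>i. a i * complex_of_real (g i)"
    and "X \<equiv> \<lambda>i j. \<Sum>m<M. h (m, i) * cnj (h (m, j))"
  shows "deflection N M st2 sv2 sn2 (\<lambda>m i. h (m, i) * of_real (g i)) a =
   ((1 / real M) * (st2 * Re (\<Sum>i<N. \<Sum>j<N. c i * cnj (c j) * X i j)))\<^sup>2 /
   ((1 / real M)\<^sup>2 * ((\<Sum>i<N. \<Sum>j<N. ((cmod (c i))\<^sup>2 * sv2 i) * ((cmod (c j))\<^sup>2 * sv2 j) * (cmod (X i j))\<^sup>2)
       + 2 * sn2 * Re (\<Sum>i<N. of_real ((cmod (c i))\<^sup>2 * sv2 i) * X i i) + real M * sn2\<^sup>2))"
proof -
  let ?H = "\<lambda>m i. h (m, i) * complex_of_real (g i)"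
  let ?G = "Gf N M ?H a"
  have F: "deflection N M st2 sv2 sn2 ?H a =
    ((1 / real M) * (\<Sum>m<M. Re (?G True st2 sv2 sn2 m m - ?G False st2 sv2 sn2 m m)))\<^sup>2 /
    ((1 / real M)\<^sup>2 * (\<Sum>m<M. \<Sum>m'<M. (cmod (?G False st2 sv2 sn2 m m'))\<^sup>2))"
    by (rule defl_formula[OF mom4_sig[OF pos]])
  have u: "(\<Sum>i<N. ?H m i * a i) = (\<Sum>i<N. h (m, i) * c i)" for m
    unfolding c_def by (simp add: mult_ac)
  have num: "(\<Sum>m<M. Re (?G True st2 sv2 sn2 m m - ?G False st2 sv2 sn2 m m)) = st2 * Re (\<Sum>i<N. \<Sum>j<N. c i * cnj (c j) * X i j)"
  proof -
    have "(\<Sum>m<M. Re (?G True st2 sv2 sn2 m m - ?G False st2 sv2 sn2 m m)) =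
        (\<Sum>m<M. Re (of_real st2 * ((\<Sum>i<N. h (m, i) * c i) * cnj (\<Sum>i<N. h (m, i) * c i))))"
    proof (intro sum.cong refl arg_cong[where f=Re])
      fix m assume "m \<in> {..<M}"
      then have m: "m < M" by simp
      show "?G True st2 sv2 sn2 m m - ?G False st2 sv2 sn2 m m =
         of_real st2 * ((\<Sum>i<N. h (m, i) * c i) * cnj (\<Sum>i<N. h (m, i) * c i))"
        unfolding Gf_eval[OF m m] u by (simp only: if_True if_False add_0_left) (simp add: mult.assoc)
    qed
    also have "\<dots> = st2 * Re (\<Sum>m<M. (\<Sum>i<N. h (m, i) * c i) * cnj (\<Sum>i<N. h (m, i) * c i))"
      by (simp add: sum_distrib_left)
    also have "\<dots> = st2 * Re (\<Sum>i<N. \<Sum>j<N. c i * cnj (c j) * X i j)"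
      unfolding id1 X_def ..
    finally show ?thesis .
  qed
  define w where "w i = (cmod (c i))\<^sup>2 * sv2 i" for i
  define A where "A m m' = (\<Sum>i<N. h (m, i) * cnj (h (m', i)) * of_real (w i))" for m m'
  have G0: "?G False st2 sv2 sn2 m m' = A m m' + (if m = m' then of_real sn2 else 0)" if "m < M" "m' < M" for m m'
  proof -
    have ti: "?H m i * a i * cnj (?H m' i * a i) * of_real (sv2 i) = h (m, i) * cnj (h (m', i)) * of_real (w i)" for i
    proof -
      have "complex_of_real (w i) = a i * of_real (g i) * cnj (a i * of_real (g i)) * of_real (sv2 i)"
        by (simp only: w_def c_def of_real_mult complex_norm_square)
      then show ?thesis by (simp add: mult_ac)
    qed
    have s: "(\<Sum>i<N. ?H m i * a i * cnj (?H m' i * a i) * of_real (sv2 i)) = A m m'"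
      unfolding A_def by (rule sum.cong[OF refl]) (rule ti)
    show ?thesis unfolding Gf_eval[OF that] s by simp
  qed
  have den: "(\<Sum>m<M. \<Sum>m'<M. (cmod (?G False st2 sv2 sn2 m m'))\<^sup>2) =
     (\<Sum>i<N. \<Sum>j<N. w i * w j * (cmod (X i j))\<^sup>2) + 2 * sn2 * Re (\<Sum>i<N. of_real (w i) * X i i) + real M * sn2\<^sup>2"
  proof -
    have "(\<Sum>m<M. \<Sum>m'<M. (cmod (?G False st2 sv2 sn2 m m'))\<^sup>2) =
        (\<Sum>m<M. \<Sum>m'<M. (cmod (A m m'))\<^sup>2 + (if m = m' then 2 * sn2 * Re (A m m) + sn2\<^sup>2 else 0))"
      by (intro sum.cong refl) (auto simp: G0 cmod_add_real_sq)
    also have "\<dots> = (\<Sum>m<M. \<Sum>m'<M. (cmod (A m m'))\<^sup>2) + (\<Sum>m<M. 2 * sn2 * Re (A m m) + sn2\<^sup>2)"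
      by (simp add: sum.distrib)
    also have "(\<Sum>m<M. \<Sum>m'<M. (cmod (A m m'))\<^sup>2) = (\<Sum>i<N. \<Sum>j<N. w i * w j * (cmod (X i j))\<^sup>2)"
      unfolding A_def X_def by (rule id2)
    also have "(\<Sum>m<M. 2 * sn2 * Re (A m m) + sn2\<^sup>2) = 2 * sn2 * Re (\<Sum>m<M. A m m) + real M * sn2\<^sup>2"
      by (simp add: sum.distrib sum_distrib_left)
    also have "(\<Sum>m<M. A m m) = (\<Sum>i<N. of_real (w i) * X i i)"
      unfolding A_def X_def by (subst sum.swap) (simp add: sum_distrib_left mult_ac)
    finally show ?thesis by simp
  qed
  show ?thesis unfolding F num den w_def ..
qed

lemma alg_scale:
  fixes Z B :: complex and A M st2 sn2 :: real
  assumes "M > 0"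
  shows "((1 / M) * (st2 * Re (of_real M * Z)))\<^sup>2 / ((1 / M)\<^sup>2 * (M * A + 2 * sn2 * Re (of_real M * B) + M * sn2\<^sup>2))
    = (st2 * Re (of_real (sqrt M) * Z))\<^sup>2 / (A + 2 * sn2 * Re B + sn2\<^sup>2)"
proof -
  have e1: "((1 / M) * (st2 * Re (of_real M * Z)))\<^sup>2 = (st2 * Re Z)\<^sup>2" using assms by simp
  have e2: "(1 / M)\<^sup>2 * (M * A + 2 * sn2 * Re (of_real M * B) + M * sn2\<^sup>2) = (A + 2 * sn2 * Re B + sn2\<^sup>2) / M"
    using assms by (simp add: power2_eq_square field_simps)
  have e3: "(st2 * Re (of_real (sqrt M) * Z))\<^sup>2 = M * (st2 * Re Z)\<^sup>2"
    using assms by (simp add: power_mult_distrib)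
  show ?thesis unfolding e1 e2 e3 using assms by (simp add: field_simps)
qed

lemma defl_scaled:
  fixes h :: "nat \<times> nat \<Rightarrow> complex" and a :: "nat \<Rightarrow> complex" and g :: "nat \<Rightarrow> real" and M :: nat
  assumes pos: "st2 > 0" "sn2 > 0" "\<And>i. i < N \<Longrightarrow> sv2 i > 0" and M: "M \<ge> 1"
  defines "c \<equiv> \<lambda>i. a i * complex_of_real (g i)"
    and "R \<equiv> \<lambda>i j. (\<Sum>m<M. h (m, i) * cnj (h (m, j))) / of_nat M"
    and "w \<equiv> \<lambda>i. (cmod (a i * complex_of_real (g i)))\<^sup>2 * sv2 i"
  shows "deflection N M st2 sv2 sn2 (\<lambda>m i. h (m, i) * of_real (g i)) a =
   (st2 * Re (\<Sum>i<N. \<Sum>j<N. of_real (sqrt M) * c i * cnj (c j) * R i j))\<^sup>2 /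
   ((\<Sum>i<N. \<Sum>j<N. (sqrt M * w i) * (sqrt M * w j) * (cmod (R i j))\<^sup>2)
       + 2 * sn2 * Re (\<Sum>i<N. of_real (w i) * R i i) + sn2\<^sup>2)"
proof -
  define X where "X = (\<lambda>i j. \<Sum>m<M. h (m, i) * cnj (h (m, j)))"
  have Mp: "real M > 0" using M by simp
  have sq: "sqrt (real M) * sqrt (real M) = real M" using Mp by simp
  have XR: "X i j = of_nat M * R i j" for i j using Mp unfolding X_def R_def by simp
  have D: "deflection N M st2 sv2 sn2 (\<lambda>m i. h (m, i) * of_real (g i)) a =
   ((1 / real M) * (st2 * Re (\<Sum>i<N. \<Sum>j<N. c i * cnj (c j) * X i j)))\<^sup>2 /
   ((1 / real M)\<^sup>2 * ((\<Sum>i<N. \<Sum>j<N. w i * w j * (cmod (X i j))\<^sup>2)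
       + 2 * sn2 * Re (\<Sum>i<N. of_real (w i) * X i i) + real M * sn2\<^sup>2))"
    unfolding X_def w_def c_def by (rule defl_h[OF pos])
  have n1: "(\<Sum>i<N. \<Sum>j<N. c i * cnj (c j) * X i j) = of_real (real M) * (\<Sum>i<N. \<Sum>j<N. c i * cnj (c j) * R i j)"
    by (simp add: XR sum_distrib_left mult_ac)
  have n2: "(\<Sum>i<N. \<Sum>j<N. of_real (sqrt M) * c i * cnj (c j) * R i j) = of_real (sqrt M) * (\<Sum>i<N. \<Sum>j<N. c i * cnj (c j) * R i j)"
    by (simp add: sum_distrib_left mult_ac)
  have d1: "(\<Sum>i<N. \<Sum>j<N. w i * w j * (cmod (X i j))\<^sup>2) = real M * (\<Sum>i<N. \<Sum>j<N. (sqrt M * w i) * (sqrt M * w j) * (cmod (R i j))\<^sup>2)"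
  proof -
    have t: "w i * w j * (cmod (X i j))\<^sup>2 = real M * ((sqrt M * w i) * (sqrt M * w j) * (cmod (R i j))\<^sup>2)" for i j
      unfolding XR norm_mult using sq by (simp add: power2_eq_square mult_ac)
    show ?thesis unfolding sum_distrib_left by (intro sum.cong refl t)
  qed
  have d2: "(\<Sum>i<N. of_real (w i) * X i i) = of_real (real M) * (\<Sum>i<N. of_real (w i) * R i i)"
    by (simp add: XR sum_distrib_left mult_ac)
  show ?thesis unfolding D n1 n2 d1 d2 by (rule alg_scale[OF Mp])
qed

lemma det_limit:
  fixes h :: "nat \<times> nat \<Rightarrow> complex" and a :: "nat \<Rightarrow> nat \<Rightarrow> complex" and g P :: "nat \<Rightarrow> real"
  assumes pos: "st2 > 0" "sn2 > 0" "\<And>i. i < N \<Longrightarrow> sv2 i > 0"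
    and P: "\<And>i. i < N \<Longrightarrow> P i \<ge> 0"
    and aP: "\<And>M i. M \<ge> 1 \<Longrightarrow> i < N \<Longrightarrow> (cmod (a M i))\<^sup>2 = P i / sqrt (real M)"
    and R: "\<And>i j. i < N \<Longrightarrow> j < N \<Longrightarrow>
       (\<lambda>M. (\<Sum>m<M. h (m, i) * cnj (h (m, j))) / of_nat M) \<longlonglongrightarrow> (if i = j then 1 else 0)"
  shows "(\<lambda>M. deflection N M st2 sv2 sn2 (\<lambda>m i. h (m, i) * of_real (g i)) (a M)) \<longlonglongrightarrow>
     (st2 * (\<Sum>i<N. (g i)\<^sup>2 * P i))\<^sup>2 / ((\<Sum>i<N. ((g i)\<^sup>2 * P i * sv2 i)\<^sup>2) + sn2\<^sup>2)"
proof -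
  define RR where "RR M i j = (\<Sum>m<M. h (m, i) * cnj (h (m, j))) / of_nat M" for M i j
  define c where "c M i = a M i * complex_of_real (g i)" for M i
  define w where "w M i = (cmod (a M i * complex_of_real (g i)))\<^sup>2 * sv2 i" for M i
  define K where "K i = (g i)\<^sup>2 * P i * sv2 i" for i
  define z where "z M i j = of_real (sqrt (real M)) * c M i * cnj (c M j)" for M i j
  define dl where "dl i j = (if i = j then 1 else 0 :: complex)" for i j :: nat
  define nM where "nM M = Re (\<Sum>i<N. \<Sum>j<N. z M i j * RR M i j)" for M
  define dM where "dM M = (\<Sum>i<N. \<Sum>j<N. (sqrt M * w M i) * (sqrt M * w M j) * (cmod (RR M i j))\<^sup>2)
      + 2 * sn2 * Re (\<Sum>i<N. of_real (w M i) * RR M i i) + sn2\<^sup>2" for M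
  have evM: "\<forall>\<^sub>F M in sequentially. (1::nat) \<le> M" by (rule eventually_ge_at_top)
  have ev: "\<forall>\<^sub>F M in sequentially. (st2 * nM M)\<^sup>2 / dM M = deflection N M st2 sv2 sn2 (\<lambda>m i. h (m, i) * of_real (g i)) (a M)"
    using evM
  proof eventually_elim
    case (elim M)
    show ?case unfolding nM_def dM_def z_def c_def w_def RR_def
      by (rule defl_scaled[OF pos elim, symmetric])
  qed
  have cm2: "(cmod (c M i))\<^sup>2 = (g i)\<^sup>2 * P i / sqrt M" if "M \<ge> 1" "i < N" for M i
    unfolding c_def norm_mult power_mult_distrib aP[OF that] by simp
  have sw: "sqrt M * w M i = K i" if "M \<ge> 1" "i < N" for M i
    using cm2[OF that] that unfolding w_def K_def c_def by simp
  have invsq: "(\<lambda>M. x / sqrt (real M)) \<longlonglongrightarrow> 0" for x :: real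
    by (rule tendsto_divide_0[OF tendsto_const filterlim_at_top_imp_at_infinity[OF
        filterlim_compose[OF sqrt_at_top filterlim_real_sequentially]]])
  have wlim: "(\<lambda>M. w M i) \<longlonglongrightarrow> 0" if "i < N" for i
  proof -
    have "\<forall>\<^sub>F M in sequentially. K i / sqrt (real M) = w M i"
      using evM by eventually_elim (use sw that in \<open>auto simp: field_simps\<close>)
    then show ?thesis by (rule Lim_transform_eventually[OF invsq])
  qed
  have zdiag: "z M i i = of_real ((g i)\<^sup>2 * P i)" if "M \<ge> 1" "i < N" for M i
  proof -
    have "z M i i = of_real (sqrt M) * (c M i * cnj (c M i))"
      unfolding z_def by (simp add: mult.assoc)
    also have "\<dots> = of_real (sqrt M * (cmod (c M i))\<^sup>2)"
      by (simp only: complex_norm_square[symmetric] of_real_mult)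
    also have "\<dots> = of_real ((g i)\<^sup>2 * P i)" using cm2[OF that] that by simp
    finally show ?thesis .
  qed
  have zbnd: "cmod (z M i j) = sqrt ((g i)\<^sup>2 * P i * ((g j)\<^sup>2 * P j))" if "M \<ge> 1" "i < N" "j < N" for M i j
  proof -
    have "(cmod (z M i j))\<^sup>2 = real M * (cmod (c M i))\<^sup>2 * (cmod (c M j))\<^sup>2"
      unfolding z_def norm_mult power_mult_distrib using that by simp
    also have "\<dots> = (sqrt M * (cmod (c M i))\<^sup>2) * (sqrt M * (cmod (c M j))\<^sup>2)"
    proof -
      have sq: "sqrt (real M) * sqrt (real M) = real M" by simp
      have A: "(sqrt M * x) * (sqrt M * y) = (sqrt M * sqrt M) * (x * y)" for x y :: real by (simp add: mult_ac)
      show ?thesis unfolding A sq by (simp add: mult.assoc)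
    qed
    also have "\<dots> = (g i)\<^sup>2 * P i * ((g j)\<^sup>2 * P j)"
      using cm2[OF that(1,2)] cm2[OF that(1,3)] that by simp
    finally have e: "(cmod (z M i j))\<^sup>2 = (g i)\<^sup>2 * P i * ((g j)\<^sup>2 * P j)" .
    show ?thesis using real_sqrt_abs[of "cmod (z M i j)"] unfolding e by simp
  qed
  have nlim: "nM \<longlonglongrightarrow> (\<Sum>i<N. (g i)\<^sup>2 * P i)"
  proof -
    have E: "(\<lambda>M. Re (\<Sum>i<N. \<Sum>j<N. z M i j * (RR M i j - dl i j))) \<longlonglongrightarrow> Re 0"
    proof (intro tendsto_Re)
      have "(\<lambda>M. \<Sum>i<N. \<Sum>j<N. z M i j * (RR M i j - dl i j)) \<longlonglongrightarrow> (\<Sum>i<N. \<Sum>j<N. 0)"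
      proof (intro tendsto_sum)
        fix i j assume i: "i \<in> {..<N}" and j: "j \<in> {..<N}"
        have f: "(\<lambda>M. RR M i j - dl i j) \<longlonglongrightarrow> 0"
          using R[of i j] i j unfolding RR_def dl_def by (simp add: LIM_zero)
        show "(\<lambda>M. z M i j * (RR M i j - dl i j)) \<longlonglongrightarrow> 0"
        proof (rule tendsto_0_le[OF f])
          show "\<forall>\<^sub>F M in sequentially. norm (z M i j * (RR M i j - dl i j)) \<le> norm (RR M i j - dl i j) * sqrt ((g i)\<^sup>2 * P i * ((g j)\<^sup>2 * P j))"
            using evM by eventually_elim (use i j zbnd in \<open>simp add: norm_mult mult.commute\<close>)
        qed
      qed
      then show "(\<lambda>M. \<Sum>i<N. \<Sum>j<N. z M i j * (RR M i j - dl i j)) \<longlonglongrightarrow> 0" by simp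
    qed
    have ev2: "\<forall>\<^sub>F M in sequentially. (\<Sum>i<N. (g i)\<^sup>2 * P i) + Re (\<Sum>i<N. \<Sum>j<N. z M i j * (RR M i j - dl i j)) = nM M"
      using evM
    proof eventually_elim
      case (elim M)
      have "(\<Sum>i<N. \<Sum>j<N. z M i j * RR M i j) = (\<Sum>i<N. \<Sum>j<N. z M i j * dl i j) + (\<Sum>i<N. \<Sum>j<N. z M i j * (RR M i j - dl i j))"
        by (simp add: sum.distrib[symmetric] algebra_simps)
      also have "(\<Sum>i<N. \<Sum>j<N. z M i j * dl i j) = (\<Sum>i<N. z M i i)"
        unfolding dl_def by (simp add: if_distrib[of "\<lambda>x. _ * x"] sum.delta cong: if_cong)
      also have "\<dots> = (\<Sum>i<N. of_real ((g i)\<^sup>2 * P i))" using zdiag elim by simp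
      finally show ?case unfolding nM_def by simp
    qed
    have "(\<lambda>M. (\<Sum>i<N. (g i)\<^sup>2 * P i) + Re (\<Sum>i<N. \<Sum>j<N. z M i j * (RR M i j - dl i j))) \<longlonglongrightarrow> (\<Sum>i<N. (g i)\<^sup>2 * P i) + Re 0"
      by (intro tendsto_add tendsto_const E)
    then show ?thesis using Lim_transform_eventually[OF _ ev2] by simp
  qed
  have dlim: "dM \<longlonglongrightarrow> (\<Sum>i<N. (K i)\<^sup>2) + sn2\<^sup>2"
  proof -
    have ev3: "\<forall>\<^sub>F M in sequentially. (\<Sum>i<N. \<Sum>j<N. K i * K j * (cmod (RR M i j))\<^sup>2)
      + 2 * sn2 * Re (\<Sum>i<N. of_real (w M i) * RR M i i) + sn2\<^sup>2 = dM M"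
      using evM by eventually_elim (simp add: dM_def sw)
    have "(\<lambda>M. (\<Sum>i<N. \<Sum>j<N. K i * K j * (cmod (RR M i j))\<^sup>2)
      + 2 * sn2 * Re (\<Sum>i<N. of_real (w M i) * RR M i i) + sn2\<^sup>2) \<longlonglongrightarrow>
      (\<Sum>i<N. \<Sum>j<N. K i * K j * (cmod (dl i j))\<^sup>2) + 2 * sn2 * Re (\<Sum>i<N. of_real 0 * dl i i) + sn2\<^sup>2"
    proof (intro tendsto_add tendsto_mult tendsto_const tendsto_sum tendsto_power tendsto_norm tendsto_Re tendsto_of_real)
      fix i j assume "i \<in> {..<N}" "j \<in> {..<N}"
      then show "(\<lambda>M. RR M i j) \<longlonglongrightarrow> dl i j" using R[of i j] unfolding RR_def dl_def by simp
    next
      fix i assume "i \<in> {..<N}"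
      then show "(\<lambda>M. RR M i i) \<longlonglongrightarrow> dl i i" using R[of i i] unfolding RR_def dl_def by simp
      show "(\<lambda>M. w M i) \<longlonglongrightarrow> 0" using wlim \<open>i \<in> {..<N}\<close> by simp
    qed
    moreover have "(\<Sum>i<N. \<Sum>j<N. K i * K j * (cmod (dl i j))\<^sup>2) = (\<Sum>i<N. (K i)\<^sup>2)"
    proof -
      have t: "K i * K j * (cmod (dl i j))\<^sup>2 = (if j = i then (K i)\<^sup>2 else 0)" for i j
        by (simp add: dl_def power2_eq_square)
      show ?thesis by (simp only: t) (simp add: sum.delta)
    qed
    ultimately show ?thesis using Lim_transform_eventually[OF _ ev3] by simp
  qed
  have "(\<lambda>M. (st2 * nM M)\<^sup>2 / dM M) \<longlonglongrightarrow> (st2 * (\<Sum>i<N. (g i)\<^sup>2 * P i))\<^sup>2 / ((\<Sum>i<N. (K i)\<^sup>2) + sn2\<^sup>2)"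
  proof (intro tendsto_divide tendsto_power tendsto_mult tendsto_const nlim dlim)
    have "(\<Sum>i<N. (K i)\<^sup>2) \<ge> 0" by (intro sum_nonneg) simp
    moreover have "sn2\<^sup>2 > 0" using pos(2) by simp
    ultimately show "(\<Sum>i<N. (K i)\<^sup>2) + sn2\<^sup>2 \<noteq> 0" by linarith
  qed
  then show ?thesis using Lim_transform_eventually[OF _ ev] unfolding K_def by simp
qed

lemma chan_pps: "product_prob_space (\<lambda>_::nat \<times> nat. cgauss 1)"
  by (rule product_prob_spaceI) (rule prob_cgauss, simp)

lemma chan_prob: "prob_space chan_space"
  unfolding chan_space_def by (rule prob_space_PiM) (rule prob_cgauss, simp)

lemma mom4_chan:
  assumes fin: "finite K"
  shows "mom4 chan_space K (\<lambda>k h. h k) (\<lambda>_. 1)"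
proof -
  interpret product_prob_space "\<lambda>_::nat \<times> nat. cgauss 1" UNIV by (rule chan_pps)
  have m: "mom4 (PiM K (\<lambda>_. cgauss 1)) K (\<lambda>k x. x k) (\<lambda>_. 1)"
    by (rule mom4_PiM[OF fin]) simp
  have D: "distr chan_space (PiM K (\<lambda>_. cgauss 1)) (\<lambda>x. restrict x K) = PiM K (\<lambda>_. cgauss 1)"
    unfolding chan_space_def by (rule distr_PiM_restrict_finite[OF fin]) simp
  have rm: "(\<lambda>x. restrict x K) \<in> measurable chan_space (PiM K (\<lambda>_. cgauss 1))"
    unfolding chan_space_def by (rule measurable_restrict_subset) simp
  have meas: "(\<lambda>h. h k) \<in> borel_measurable chan_space" for k
  proof -
    have "(\<lambda>h. h k) \<in> measurable chan_space (cgauss 1)"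
      unfolding chan_space_def by (rule measurable_component_singleton) simp
    then show ?thesis using measurable_cong_sets[OF refl sets_cgauss, of chan_space 1] by simp
  qed
  have mom: "has_bochner_integral chan_space (mon K (\<lambda>k h. h k) p q) (\<Prod>k\<in>K. cm 1 (p k) (q k))"
    if pq: "(\<Sum>k\<in>K. p k + q k) \<le> 4" for p q
  proof -
    have h: "has_bochner_integral (PiM K (\<lambda>_. cgauss 1)) (mon K (\<lambda>k x. x k) p q) (\<Prod>k\<in>K. cm 1 (p k) (q k))"
      using m pq unfolding mom4_def by auto
    then have fm: "mon K (\<lambda>k x. x k) p q \<in> borel_measurable (PiM K (\<lambda>_. cgauss 1))"
      by (auto simp: has_bochner_integral_iff)
    have "has_bochner_integral chan_space (\<lambda>h. mon K (\<lambda>k x. x k) p q (restrict h K)) (\<Prod>k\<in>K. cm 1 (p k) (q k))"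
    proof -
      have h': "has_bochner_integral (distr chan_space (PiM K (\<lambda>_. cgauss 1)) (\<lambda>x. restrict x K)) (mon K (\<lambda>k x. x k) p q) (\<Prod>k\<in>K. cm 1 (p k) (q k))"
        by (subst D) (rule h)
      then show ?thesis unfolding has_bochner_integral_iff
        by (simp add: integrable_distr_eq[OF rm fm] integral_distr[OF rm fm])
    qed
    moreover have "(\<lambda>h. mon K (\<lambda>k x. x k) p q (restrict h K)) = mon K (\<lambda>k h. h k) p q"
      unfolding mon_def by (intro ext prod.cong) auto
    ultimately show ?thesis by simp
  qed
  show ?thesis unfolding mom4_def using fin chan_prob meas mom by blast
qed

definition Zs :: "nat \<Rightarrow> (nat \<Rightarrow> complex) \<Rightarrow> nat \<Rightarrow> (nat \<times> nat \<Rightarrow> complex) \<Rightarrow> real" where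
  "Zs N cv M h = (\<Sum>m<M. (cmod (\<Sum>i<N. cv i * h (m, i)))\<^sup>2)"

definition sig :: "nat \<Rightarrow> (nat \<Rightarrow> complex) \<Rightarrow> real" where
  "sig N cv = (\<Sum>i<N. (cmod (cv i))\<^sup>2)"

lemma Zs_moments:
  shows "has_bochner_integral chan_space (Zs N cv M) (real M * sig N cv)"
    and "has_bochner_integral chan_space (\<lambda>h. (Zs N cv M h)\<^sup>2) ((real M)\<^sup>2 * (sig N cv)\<^sup>2 + real M * (sig N cv)\<^sup>2)"
proof -
  define K where "K = {..<M} \<times> {..<N}"
  have fin: "finite K" unfolding K_def by simp
  have m4: "mom4 chan_space K (\<lambda>k h. h k) (\<lambda>_. 1)" by (rule mom4_chan[OF fin])
  define cc where "cc m k = (if fst k = m then cv (snd k) else 0)" for m and k :: "nat \<times> nat"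
  have Y: "(\<Sum>k\<in>K. cc m k * h k) = (\<Sum>i<N. cv i * h (m, i))" if "m < M" for m h
  proof -
    have "(\<Sum>k\<in>K. cc m k * h k) = (\<Sum>m'<M. \<Sum>i<N. cc m (m', i) * h (m', i))"
      unfolding K_def by (simp add: sum.cartesian_product)
    also have "\<dots> = (\<Sum>m'<M. if m' = m then (\<Sum>i<N. cv i * h (m, i)) else 0)"
      by (intro sum.cong refl) (simp add: cc_def)
    also have "\<dots> = (\<Sum>i<N. cv i * h (m, i))" using that by simp
    finally show ?thesis .
  qed
  have G: "(\<Sum>k\<in>K. cc m k * cnj (cc m' k) * of_real 1) = (if m = m' then of_real (sig N cv) else 0)"
    if "m < M" "m' < M" for m m'
  proof -
    have "(\<Sum>k\<in>K. cc m k * cnj (cc m' k) * of_real 1) = (\<Sum>m''<M. \<Sum>i<N. cc m (m'', i) * cnj (cc m' (m'', i)))"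
      unfolding K_def by (simp add: sum.cartesian_product)
    also have "\<dots> = (\<Sum>m''<M. if m'' = m then (if m = m' then (\<Sum>i<N. cv i * cnj (cv i)) else 0) else 0)"
      by (intro sum.cong refl) (auto simp: cc_def)
    also have "\<dots> = (if m = m' then (\<Sum>i<N. cv i * cnj (cv i)) else 0)" using that by simp
    also have "(\<Sum>i<N. cv i * cnj (cv i)) = of_real (sig N cv)"
      unfolding sig_def of_real_sum complex_norm_square ..
    finally show ?thesis .
  qed
  have h2: "has_bochner_integral chan_space (\<lambda>h. (\<Sum>i<N. cv i * h (m, i)) * cnj (\<Sum>i<N. cv i * h (m, i))) (of_real (sig N cv))"
    if "m < M" for m
    using mom4_quad2[OF m4, of "cc m" "cc m"] unfolding Y[OF that] G[OF that that] by simp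
  have h4: "has_bochner_integral chan_space (\<lambda>h. (\<Sum>i<N. cv i * h (m, i)) * cnj (\<Sum>i<N. cv i * h (m, i)) *
      ((\<Sum>i<N. cv i * h (m', i)) * cnj (\<Sum>i<N. cv i * h (m', i))))
      (of_real ((sig N cv)\<^sup>2 + (if m = m' then (sig N cv)\<^sup>2 else 0)))"
    if "m < M" "m' < M" for m m'
  proof -
    have H: "has_bochner_integral chan_space (\<lambda>h. (\<Sum>i<N. cv i * h (m, i)) * cnj (\<Sum>i<N. cv i * h (m, i)) *
      ((\<Sum>i<N. cv i * h (m', i)) * cnj (\<Sum>i<N. cv i * h (m', i))))
      ((if m = m then of_real (sig N cv) else 0) * (if m' = m' then of_real (sig N cv) else 0) +
       (if m = m' then of_real (sig N cv) else 0) * (if m' = m then of_real (sig N cv) else 0))"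
      using mom4_quad4[OF m4, of "cc m" "cc m" "cc m'" "cc m'"]
      unfolding Y[OF that(1)] Y[OF that(2)] G[OF that(1) that(1)] G[OF that(2) that(2)] G[OF that(1) that(2)] G[OF that(2) that(1)] .
    have v: "(if m = m then of_real (sig N cv) else 0) * (if m' = m' then of_real (sig N cv) else 0) +
       (if m = m' then of_real (sig N cv) else 0) * (if m' = m then of_real (sig N cv) else 0) =
       (complex_of_real ((sig N cv)\<^sup>2 + (if m = m' then (sig N cv)\<^sup>2 else 0)))"
      by (cases "m = m'") (simp_all add: power2_eq_square)
    show ?thesis using H unfolding v .
  qed
  have "has_bochner_integral chan_space (\<lambda>h. \<Sum>m<M. (\<Sum>i<N. cv i * h (m, i)) * cnj (\<Sum>i<N. cv i * h (m, i))) (\<Sum>m<M. of_real (sig N cv))"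
    by (intro has_bochner_integral_sum h2) simp
  from has_bochner_integral_Re[OF this]
  have "has_bochner_integral chan_space (\<lambda>h. \<Sum>m<M. (cmod (\<Sum>i<N. cv i * h (m, i)))\<^sup>2) (\<Sum>m<M. sig N cv)"
    by (simp only: complex_norm_square[symmetric] Re_sum Re_complex_of_real)
  then show "has_bochner_integral chan_space (Zs N cv M) (real M * sig N cv)"
    unfolding Zs_def by simp
  have "has_bochner_integral chan_space (\<lambda>h. \<Sum>m<M. \<Sum>m'<M. (\<Sum>i<N. cv i * h (m, i)) * cnj (\<Sum>i<N. cv i * h (m, i)) *
      ((\<Sum>i<N. cv i * h (m', i)) * cnj (\<Sum>i<N. cv i * h (m', i))))
      (\<Sum>m<M. \<Sum>m'<M. of_real ((sig N cv)\<^sup>2 + (if m = m' then (sig N cv)\<^sup>2 else 0)))"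
    by (intro has_bochner_integral_sum h4) auto
  from has_bochner_integral_Re[OF this]
  have "has_bochner_integral chan_space (\<lambda>h. \<Sum>m<M. \<Sum>m'<M. (cmod (\<Sum>i<N. cv i * h (m, i)))\<^sup>2 * (cmod (\<Sum>i<N. cv i * h (m', i)))\<^sup>2)
      (\<Sum>m<M. \<Sum>m'<M. ((sig N cv)\<^sup>2 + (if m = m' then (sig N cv)\<^sup>2 else 0)))"
    by (simp only: complex_norm_square[symmetric] of_real_mult[symmetric] Re_sum Re_complex_of_real)
  moreover have "(\<Sum>m<M. \<Sum>m'<M. ((sig N cv)\<^sup>2 + (if m = m' then (sig N cv)\<^sup>2 else 0))) = (real M)\<^sup>2 * (sig N cv)\<^sup>2 + real M * (sig N cv)\<^sup>2"
    by (simp add: sum.distrib power2_eq_square algebra_simps)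
  moreover have "(\<lambda>h. \<Sum>m<M. \<Sum>m'<M. (cmod (\<Sum>i<N. cv i * h (m, i)))\<^sup>2 * (cmod (\<Sum>i<N. cv i * h (m', i)))\<^sup>2) = (\<lambda>h. (Zs N cv M h)\<^sup>2)"
    unfolding Zs_def by (simp add: power2_eq_square[of "sum _ _"] sum_product)
  ultimately show "has_bochner_integral chan_space (\<lambda>h. (Zs N cv M h)\<^sup>2) ((real M)\<^sup>2 * (sig N cv)\<^sup>2 + real M * (sig N cv)\<^sup>2)"
    by simp
qed

lemma Zs_meas: "Zs N cv M \<in> borel_measurable chan_space"
  using Zs_moments(1) by (auto simp: has_bochner_integral_iff)

lemma cheb_sq:
  assumes e: "\<epsilon> > 0" and n: "n \<ge> 1"
  shows "measure chan_space {h \<in> space chan_space. \<epsilon> * real (n\<^sup>2) \<le> \<bar>Zs N cv (n\<^sup>2) h - real (n\<^sup>2) * sig N cv\<bar>}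
     \<le> (sig N cv)\<^sup>2 / \<epsilon>\<^sup>2 * inverse (real n ^ 2)"
proof -
  interpret prob_space chan_space by (rule chan_prob)
  define M where "M = n\<^sup>2"
  have Mp: "real M > 0" using n by (simp add: M_def)
  note h1 = Zs_moments(1)[of N cv M] and h2 = Zs_moments(2)[of N cv M]
  have i1: "integrable chan_space (Zs N cv M)" and i2: "integrable chan_space (\<lambda>h. (Zs N cv M h)\<^sup>2)"
    using h1 h2 by (auto simp: has_bochner_integral_iff)
  have ex: "expectation (Zs N cv M) = real M * sig N cv" using h1 by (simp add: has_bochner_integral_iff)
  have var: "variance (Zs N cv M) = real M * (sig N cv)\<^sup>2"
    using variance_eq[OF i1 i2] h2 ex by (simp add: has_bochner_integral_iff power_mult_distrib)
  have "prob {h \<in> space chan_space. \<bar>Zs N cv M h - expectation (Zs N cv M)\<bar> \<ge> \<epsilon> * real M}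
      \<le> variance (Zs N cv M) / (\<epsilon> * real M)\<^sup>2"
    by (rule Chebyshev_inequality) (use Zs_meas i2 e Mp in auto)
  also have "\<dots> = (sig N cv)\<^sup>2 / \<epsilon>\<^sup>2 * inverse (real n ^ 2)"
    unfolding var using Mp e by (simp add: M_def power2_eq_square field_simps)
  finally show ?thesis using ex unfolding M_def by (simp add: mult.commute)
qed

lemma AE_sq:
  assumes e: "\<epsilon> > 0"
  shows "AE h in chan_space. eventually (\<lambda>n. \<bar>Zs N cv (n\<^sup>2) h / real (n\<^sup>2) - sig N cv\<bar> < \<epsilon>) sequentially"
proof -
  interpret prob_space chan_space by (rule chan_prob)
  define A where "A n = {h \<in> space chan_space. \<epsilon> * real (n\<^sup>2) \<le> \<bar>Zs N cv (n\<^sup>2) h - real (n\<^sup>2) * sig N cv\<bar>}" for n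
  have As: "A n \<in> sets chan_space" for n
  proof -
    have [measurable]: "Zs N cv (n\<^sup>2) \<in> borel_measurable chan_space" by (rule Zs_meas)
    show ?thesis unfolding A_def by measurable
  qed
  have "summable (\<lambda>n. measure chan_space (A n))"
  proof (rule summable_comparison_test')
    show "summable (\<lambda>n. (sig N cv)\<^sup>2 / \<epsilon>\<^sup>2 * inverse (real n ^ 2))"
      by (intro summable_mult inverse_power_summable) simp
    show "norm (measure chan_space (A n)) \<le> (sig N cv)\<^sup>2 / \<epsilon>\<^sup>2 * inverse (real n ^ 2)" if "n \<ge> 1" for n
      using cheb_sq[OF e that, of N cv] unfolding A_def by simp
  qed
  then have "AE h in chan_space. eventually (\<lambda>n. h \<in> space chan_space - A n) sequentially"
    by (intro borel_cantelli_AE1 As) (auto simp: emeasure_eq_measure)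
  then show ?thesis
  proof (rule AE_mp, intro AE_I2 impI)
    fix h assume h: "h \<in> space chan_space" and ev: "eventually (\<lambda>n. h \<in> space chan_space - A n) sequentially"
    show "eventually (\<lambda>n. \<bar>Zs N cv (n\<^sup>2) h / real (n\<^sup>2) - sig N cv\<bar> < \<epsilon>) sequentially"
      using ev eventually_ge_at_top[of 1]
    proof eventually_elim
      case (elim n)
      then have lt: "\<bar>Zs N cv (n\<^sup>2) h - real (n\<^sup>2) * sig N cv\<bar> < \<epsilon> * real (n\<^sup>2)"
        using h unfolding A_def by auto
      have p: "real (n\<^sup>2) > 0" using elim by simp
      have "Zs N cv (n\<^sup>2) h / real (n\<^sup>2) - sig N cv = (Zs N cv (n\<^sup>2) h - real (n\<^sup>2) * sig N cv) / real (n\<^sup>2)"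
        using p by (simp add: field_simps)
      then show ?case using lt p by (simp add: abs_div pos_divide_less_eq)
    qed
  qed
qed

lemma AE_sq_lim:
  "AE h in chan_space. (\<lambda>n. Zs N cv (n\<^sup>2) h / real (n\<^sup>2)) \<longlonglongrightarrow> sig N cv"
proof -
  have "AE h in chan_space. \<forall>l::nat. eventually (\<lambda>n. \<bar>Zs N cv (n\<^sup>2) h / real (n\<^sup>2) - sig N cv\<bar> < inverse (real (Suc l))) sequentially"
    unfolding AE_all_countable by (intro allI AE_sq) simp
  then show ?thesis
  proof (rule AE_mp, intro AE_I2 impI)
    fix h assume H: "\<forall>l::nat. eventually (\<lambda>n. \<bar>Zs N cv (n\<^sup>2) h / real (n\<^sup>2) - sig N cv\<bar> < inverse (real (Suc l))) sequentially"
    show "(\<lambda>n. Zs N cv (n\<^sup>2) h / real (n\<^sup>2)) \<longlonglongrightarrow> sig N cv"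
    proof (rule tendstoI)
      fix e :: real assume "e > 0"
      then obtain l where l: "inverse (real (Suc l)) < e" using reals_Archimedean by blast
      show "eventually (\<lambda>n. dist (Zs N cv (n\<^sup>2) h / real (n\<^sup>2)) (sig N cv) < e) sequentially"
        using H[rule_format, of l] by eventually_elim (use l in \<open>simp add: dist_real_def\<close>)
    qed
  qed
qed

lemma sq_squeeze:
  fixes S :: "nat \<Rightarrow> real"
  assumes mono: "\<And>M. S M \<le> S (Suc M)" and nn: "\<And>M. S M \<ge> 0"
    and lim: "(\<lambda>n. S (n\<^sup>2) / real (n\<^sup>2)) \<longlonglongrightarrow> \<sigma>"
  shows "(\<lambda>M. S M / real M) \<longlonglongrightarrow> \<sigma>"
proof -
  have inc: "incseq S" by (rule incseq_SucI) (rule mono)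
  define r where "r M = nat \<lfloor>sqrt (real M)\<rfloor>" for M
  have rb: "(r M)\<^sup>2 \<le> M \<and> M < (Suc (r M))\<^sup>2" for M
  proof -
    have f0: "\<lfloor>sqrt (real M)\<rfloor> \<ge> 0" by simp
    have a: "real (r M) \<le> sqrt (real M)" unfolding r_def using f0 by simp
    have b: "sqrt (real M) < real (r M) + 1" unfolding r_def using f0 by linarith
    have "(real (r M))\<^sup>2 \<le> (sqrt (real M))\<^sup>2" using a by (intro power_mono) auto
    then have c: "real ((r M)\<^sup>2) \<le> real M" by simp
    have "(sqrt (real M))\<^sup>2 < (real (r M) + 1)\<^sup>2" using b by (intro power_strict_mono) auto
    then have d: "real M < real ((Suc (r M))\<^sup>2)" by (simp add: add.commute)
    show ?thesis using c d by linarith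
  qed
  have r1: "r M \<ge> 1" if "M \<ge> 1" for M
    unfolding r_def using that by (simp add: le_nat_iff)
  have rlim: "filterlim r at_top sequentially"
    unfolding filterlim_at_top
  proof
    fix Z :: nat
    show "eventually (\<lambda>M. Z \<le> r M) sequentially"
      using eventually_ge_at_top[of "Z\<^sup>2"]
    proof eventually_elim
      case (elim M)
      then have "Z\<^sup>2 < (Suc (r M))\<^sup>2" using rb[of M] by linarith
      then have "Z < Suc (r M)" using power_less_imp_less_base by blast
      then show ?case by simp
    qed
  qed
  define lo where "lo n = S (n\<^sup>2) / real ((Suc n)\<^sup>2)" for n
  define hi where "hi n = S ((Suc n)\<^sup>2) / real (n\<^sup>2)" for n
  have q1: "(\<lambda>n. real (n\<^sup>2) / real ((Suc n)\<^sup>2)) \<longlonglongrightarrow> 1" by real_asymp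
  have q2: "(\<lambda>n. real ((Suc n)\<^sup>2) / real (n\<^sup>2)) \<longlonglongrightarrow> 1" by real_asymp
  have lolim: "lo \<longlonglongrightarrow> \<sigma>"
  proof -
    have "(\<lambda>n. S (n\<^sup>2) / real (n\<^sup>2) * (real (n\<^sup>2) / real ((Suc n)\<^sup>2))) \<longlonglongrightarrow> \<sigma> * 1"
      by (intro tendsto_mult lim q1)
    moreover have "eventually (\<lambda>n. S (n\<^sup>2) / real (n\<^sup>2) * (real (n\<^sup>2) / real ((Suc n)\<^sup>2)) = lo n) sequentially"
      using eventually_ge_at_top[of 1] by eventually_elim (simp add: lo_def)
    ultimately show ?thesis using Lim_transform_eventually by fastforce
  qed
  have hilim: "hi \<longlonglongrightarrow> \<sigma>"
  proof -
    have l2: "(\<lambda>n. S ((Suc n)\<^sup>2) / real ((Suc n)\<^sup>2)) \<longlonglongrightarrow> \<sigma>"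
      using LIMSEQ_Suc[OF lim] .
    have "(\<lambda>n. S ((Suc n)\<^sup>2) / real ((Suc n)\<^sup>2) * (real ((Suc n)\<^sup>2) / real (n\<^sup>2))) \<longlonglongrightarrow> \<sigma> * 1"
      by (intro tendsto_mult l2 q2)
    moreover have "eventually (\<lambda>n. S ((Suc n)\<^sup>2) / real ((Suc n)\<^sup>2) * (real ((Suc n)\<^sup>2) / real (n\<^sup>2)) = hi n) sequentially"
      by (rule always_eventually) (simp add: hi_def)
    ultimately show ?thesis using Lim_transform_eventually by fastforce
  qed
  show ?thesis
  proof (rule tendsto_sandwich[OF _ _ filterlim_compose[OF lolim rlim] filterlim_compose[OF hilim rlim]])
    show "eventually (\<lambda>M. lo (r M) \<le> S M / real M) sequentially"
      using eventually_ge_at_top[of 1]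
    proof eventually_elim
      case (elim M)
      have Mp: "real M > 0" using elim by simp
      have "lo (r M) \<le> S ((r M)\<^sup>2) / real M"
      proof -
        have A1: "real M \<le> real ((Suc (r M))\<^sup>2)" using rb[of M] by (metis less_imp_le of_nat_le_iff)
        show ?thesis unfolding lo_def using A1 Mp nn by (intro divide_left_mono) auto
      qed
      also have "\<dots> \<le> S M / real M"
        using Mp incseqD[OF inc, of "(r M)\<^sup>2" M] rb[of M] by (intro divide_right_mono) auto
      finally show ?case .
    qed
    show "eventually (\<lambda>M. S M / real M \<le> hi (r M)) sequentially"
      using eventually_ge_at_top[of 1]
    proof eventually_elim
      case (elim M)
      have Mp: "real M > 0" using elim by simp
      have rp: "real ((r M)\<^sup>2) > 0" using r1[OF elim] by simp
      have "S M / real M \<le> S ((Suc (r M))\<^sup>2) / real M"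
        using Mp incseqD[OF inc, of M "(Suc (r M))\<^sup>2"] rb[of M] by (intro divide_right_mono) auto
      also have "\<dots> \<le> hi (r M)"
      proof -
        have A1: "real ((r M)\<^sup>2) \<le> real M" using rb[of M] by (metis of_nat_le_iff)
        show ?thesis unfolding hi_def using A1 rp nn Mp by (intro divide_left_mono) auto
      qed
      finally show ?case .
    qed
  qed
qed

lemma AE_Zs_lim: "AE h in chan_space. (\<lambda>M. Zs N cv M h / real M) \<longlonglongrightarrow> sig N cv"
  using AE_sq_lim[of N cv]
proof (rule AE_mp, intro AE_I2 impI)
  fix h assume L: "(\<lambda>n. Zs N cv (n\<^sup>2) h / real (n\<^sup>2)) \<longlonglongrightarrow> sig N cv"
  show "(\<lambda>M. Zs N cv M h / real M) \<longlonglongrightarrow> sig N cv"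
    by (rule sq_squeeze[OF _ _ L]) (simp_all add: Zs_def sum_nonneg)
qed

lemma polar:
  fixes a b :: complex
  shows "a * cnj b = (of_real ((cmod (a + b))\<^sup>2) - of_real ((cmod (a + (-1) * b))\<^sup>2)
     + \<i> * (of_real ((cmod (a + \<i> * b))\<^sup>2) - of_real ((cmod (a + (- \<i>) * b))\<^sup>2))) / 4"
  by (simp only: cmod_power2) (simp add: complex_eq_iff power2_eq_square algebra_simps)

definition cvv :: "nat \<Rightarrow> nat \<Rightarrow> complex \<Rightarrow> nat \<Rightarrow> complex" where
  "cvv i j t l = (if l = i then 1 else 0) + t * (if l = j then 1 else 0)"

lemma cvv_sum: "(\<Sum>l<N. cvv i j t l * h (m, l)) = h (m, i) + t * h (m, j)" if "i < N" "j < N"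
proof -
  have "cvv i j t l * h (m, l) = (if l = i then h (m, i) else 0) + (if l = j then t * h (m, j) else 0)" for l
    by (simp add: cvv_def distrib_right)
  then show ?thesis using that by (simp add: sum.distrib)
qed

lemma sig_cvv:
  assumes "i < N" "j < N"
  shows "sig N (cvv i j t) = (if i = j then (cmod (1 + t))\<^sup>2 else 1 + (cmod t)\<^sup>2)"
proof (cases "i = j")
  case True
  have "sig N (cvv i j t) = (\<Sum>l<N. if l = i then (cmod (1 + t))\<^sup>2 else 0)"
    unfolding sig_def cvv_def using True by (intro sum.cong) auto
  then show ?thesis using True assms by simp
next
  case False
  have "sig N (cvv i j t) = (\<Sum>l<N. (if l = i then 1 else 0) + (if l = j then (cmod t)\<^sup>2 else 0))"
    unfolding sig_def cvv_def using False by (intro sum.cong) auto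
  then show ?thesis using False assms by (simp add: sum.distrib)
qed

lemma AE_R:
  "AE h in chan_space. \<forall>i<N. \<forall>j<N.
     (\<lambda>M. (\<Sum>m<M. h (m, i) * cnj (h (m, j))) / of_nat M) \<longlonglongrightarrow> (if i = j then 1 else 0)"
proof -
  let ?T = "{..<N} \<times> {..<N} \<times> {1, -1, \<i>, - \<i>}"
  have "AE h in chan_space. \<forall>x\<in>?T. (\<lambda>M. Zs N (cvv (fst x) (fst (snd x)) (snd (snd x))) M h / real M)
      \<longlonglongrightarrow> sig N (cvv (fst x) (fst (snd x)) (snd (snd x)))"
    by (rule AE_finite_allI) (auto intro: AE_Zs_lim)
  then show ?thesis
  proof (rule AE_mp, intro AE_I2 impI allI)
    fix h i j
    assume H: "\<forall>x\<in>?T. (\<lambda>M. Zs N (cvv (fst x) (fst (snd x)) (snd (snd x))) M h / real M)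
      \<longlonglongrightarrow> sig N (cvv (fst x) (fst (snd x)) (snd (snd x)))"
    assume i: "i < N" and j: "j < N"
    show "(\<lambda>M. (\<Sum>m<M. h (m, i) * cnj (h (m, j))) / of_nat M) \<longlonglongrightarrow> (if i = j then 1 else 0)"
    proof -
      have L: "(\<lambda>M. Zs N (cvv i j t) M h / real M) \<longlonglongrightarrow> sig N (cvv i j t)" if "t \<in> {1, -1, \<i>, - \<i>}" for t
        using H[rule_format, of "(i, j, t)"] i j that by auto
      have Zs_eq: "Zs N (cvv i j t) M h = (\<Sum>m<M. (cmod (h (m, i) + t * h (m, j)))\<^sup>2)" for t M
        unfolding Zs_def cvv_sum[OF i j] ..
      have eq: "(\<Sum>m<M. h (m, i) * cnj (h (m, j))) / of_nat M =
        (of_real (Zs N (cvv i j 1) M h / real M) - of_real (Zs N (cvv i j (-1)) M h / real M)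
         + \<i> * (of_real (Zs N (cvv i j \<i>) M h / real M) - of_real (Zs N (cvv i j (-\<i>)) M h / real M))) / 4" for M
        unfolding Zs_eq polar[of "h (_, i)" "h (_, j)"]
        by (simp add: sum_divide_distrib[symmetric] sum_subtractf sum.distrib sum_distrib_left diff_divide_distrib
              add_divide_distrib of_real_sum[symmetric] algebra_simps)
      have "(\<lambda>M. (of_real (Zs N (cvv i j 1) M h / real M) - of_real (Zs N (cvv i j (-1)) M h / real M)
         + \<i> * (of_real (Zs N (cvv i j \<i>) M h / real M) - of_real (Zs N (cvv i j (-\<i>)) M h / real M))) / 4)
         \<longlonglongrightarrow> (of_real (sig N (cvv i j 1)) - of_real (sig N (cvv i j (-1)))
         + \<i> * (of_real (sig N (cvv i j \<i>)) - of_real (sig N (cvv i j (-\<i>))))) / 4"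
        by (intro tendsto_intros L) auto
      moreover have "(of_real (sig N (cvv i j 1)) - of_real (sig N (cvv i j (-1)))
         + \<i> * (of_real (sig N (cvv i j \<i>)) - of_real (sig N (cvv i j (-\<i>))))) / 4 = (if i = j then 1 else 0 :: complex)"
        unfolding sig_cvv[OF i j] by (simp add: cmod_power2 complex_eq_iff)
      ultimately show "(\<lambda>M. (\<Sum>m<M. h (m, i) * cnj (h (m, j))) / of_nat M) \<longlonglongrightarrow> (if i = j then 1 else 0)"
        unfolding eq by simp
    qed
  qed
qed

theorem theorem3:
  fixes N :: nat and st2 sn2 \<alpha> :: real and sv2 d P :: "nat \<Rightarrow> real"
    and a :: "nat \<Rightarrow> nat \<Rightarrow> complex"
  assumes "st2 > 0" and "sn2 > 0" and "\<alpha> > 0"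
    and "\<And>i. i < N \<Longrightarrow> sv2 i > 0"
    and "\<And>i. i < N \<Longrightarrow> d i > 0"
    and "\<And>i. i < N \<Longrightarrow> P i \<ge> 0"
    and "\<And>M i. M \<ge> 1 \<Longrightarrow> i < N \<Longrightarrow> (cmod (a M i))\<^sup>2 = P i / sqrt (real M)"
  shows "AE h in chan_space.
     (\<lambda>M. deflection N M st2 sv2 sn2
            (\<lambda>m i. h (m, i) / complex_of_real (sqrt (d i powr \<alpha>))) (a M))
     \<longlonglongrightarrow> st2\<^sup>2 * (\<Sum>i<N. P i / d i powr \<alpha>)\<^sup>2
          / ((\<Sum>i<N. (sv2 i)\<^sup>2 * (P i)\<^sup>2 / d i powr (2 * \<alpha>)) + sn2\<^sup>2)"
  using AE_R[of N]
proof (rule AE_mp, intro AE_I2 impI)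
  fix h :: "nat \<times> nat \<Rightarrow> complex"
  assume R: "\<forall>i<N. \<forall>j<N. (\<lambda>M. (\<Sum>m<M. h (m, i) * cnj (h (m, j))) / of_nat M) \<longlonglongrightarrow> (if i = j then 1 else 0)"
  define g where "g i = 1 / sqrt (d i powr \<alpha>)" for i
  have Heq: "(\<lambda>m i. h (m, i) / complex_of_real (sqrt (d i powr \<alpha>))) = (\<lambda>m i. h (m, i) * of_real (g i))"
  proof (intro ext)
    fix m i
    show "h (m, i) / complex_of_real (sqrt (d i powr \<alpha>)) = h (m, i) * of_real (g i)"
      unfolding g_def by simp
  qed
  have L: "(\<lambda>M. deflection N M st2 sv2 sn2 (\<lambda>m i. h (m, i) * of_real (g i)) (a M)) \<longlonglongrightarrow>
     (st2 * (\<Sum>i<N. (g i)\<^sup>2 * P i))\<^sup>2 / ((\<Sum>i<N. ((g i)\<^sup>2 * P i * sv2 i)\<^sup>2) + sn2\<^sup>2)"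
    by (rule det_limit[OF assms(1) assms(2) assms(4) assms(6) assms(7)], assumption+, rule R[rule_format], assumption+)
  have g2: "(g i)\<^sup>2 = 1 / d i powr \<alpha>" for i
    unfolding g_def by (simp only: power_divide power_one real_sqrt_pow2[OF powr_ge_zero])
  have e1: "(\<Sum>i<N. (g i)\<^sup>2 * P i) = (\<Sum>i<N. P i / d i powr \<alpha>)"
    by (intro sum.cong refl) (simp only: g2 times_divide_eq_left mult_1)
  have e2: "(\<Sum>i<N. ((g i)\<^sup>2 * P i * sv2 i)\<^sup>2) = (\<Sum>i<N. (sv2 i)\<^sup>2 * (P i)\<^sup>2 / d i powr (2 * \<alpha>))"
  proof (rule sum.cong[OF refl])
    fix i
    have "d i powr (2 * \<alpha>) = (d i powr \<alpha>)\<^sup>2"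
    proof -
      have "d i powr (2 * \<alpha>) = d i powr (\<alpha> + \<alpha>)" by (simp only: mult_2)
      also have "\<dots> = (d i powr \<alpha>)\<^sup>2" by (simp only: powr_add power2_eq_square)
      finally show ?thesis .
    qed
    then show "((g i)\<^sup>2 * P i * sv2 i)\<^sup>2 = (sv2 i)\<^sup>2 * (P i)\<^sup>2 / d i powr (2 * \<alpha>)"
      by (simp only: g2 power_mult_distrib power_divide power_one) (simp add: field_split_simps)
  qed
  show "(\<lambda>M. deflection N M st2 sv2 sn2 (\<lambda>m i. h (m, i) / complex_of_real (sqrt (d i powr \<alpha>))) (a M))
     \<longlonglongrightarrow> st2\<^sup>2 * (\<Sum>i<N. P i / d i powr \<alpha>)\<^sup>2 / ((\<Sum>i<N. (sv2 i)\<^sup>2 * (P i)\<^sup>2 / d i powr (2 * \<alpha>)) + sn2\<^sup>2)"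
    using L unfolding Heq e1 e2 by (simp only: power_mult_distrib[of st2])
qed

end
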